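(* Let $p>3$ be a prime. The number $N_{2,p}$ of $\overline{\mathbb{F}}_p$... more precisely, of $\mathbb{F}_p$-isomorphism classes of elliptic curves $E$ over $\mathbb{F}_p$ that possess an $\mathbb{F}_p$-rational point of order $2$ is \[ N_{2,p}=\begin{cases} \frac{4p+8}{3}, &\text{if } p\equiv 1\pmod{12},\\ \frac{4p+4}{3}, &\text{if } p\equiv 5\pmod{12},\\ \frac{4p+2}{3}, &\text{if } p\equiv 7\pmod{12},\\ \frac{4p-2}{3}, &\text{if } p\equiv 11\pmod{12}. \end{cases} \]
   Context: Isomorphism classes are taken over $\mathbb{F}_p$ (i.e., isomorphisms defined over $\mathbb{F}_p$). "Possessing 2-torsion over $\mathbb{F}_p$" means $E(\mathbb{F}_p)$ contains a point of order $2$, equivalently $2\mid \#E(\mathbb{F}_p)$. *)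

theory Defs
  imports "HOL-Number_Theory.Number_Theory"
begin

definition ec_curves :: "int \<Rightarrow> (int \<times> int) set" where
  "ec_curves p = {(a, b). a \<in> {0..<p} \<and> b \<in> {0..<p} \<and>
                          (4 * a ^ 3 + 27 * b ^ 2) mod p \<noteq> 0}"

text \<open>Affine F_p-rational points of the curve (the point at infinity O is extra).\<close>
definition on_curve :: "int \<Rightarrow> int \<times> int \<Rightarrow> int \<times> int \<Rightarrow> bool" where
  "on_curve p E P = (case E of (a, b) \<Rightarrow> case P of (x, y) \<Rightarrow>
      x \<in> {0..<p} \<and> y \<in> {0..<p} \<and> (y ^ 2 - (x ^ 3 + a * x + b)) mod p = 0)"

text \<open>A point of order 2 is a rational point P \<noteq> O with P = -P; for an affine
  point (x,y) the negative is (x,-y).\<close>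
definition has_2_torsion :: "int \<Rightarrow> int \<times> int \<Rightarrow> bool" where
  "has_2_torsion p E = (\<exists>x y. on_curve p E (x, y) \<and> y mod p = (- y) mod p)"

text \<open>F_p-isomorphism of short Weierstrass curves: (x,y) \<mapsto> (u^2 x, u^3 y),
  u \<in> F_p^*, i.e. a' = u^4 a and b' = u^6 b.\<close>
definition ec_iso :: "int \<Rightarrow> ((int \<times> int) \<times> (int \<times> int)) set" where
  "ec_iso p = {((a, b), (a', b')). (\<exists>u. u mod p \<noteq> 0 \<and>
       a' mod p = (u ^ 4 * a) mod p \<and> b' mod p = (u ^ 6 * b) mod p)}"

definition N2 :: "int \<Rightarrow> nat" where
  "N2 p = card ({E \<in> ec_curves p. has_2_torsion p E} // Restr (ec_iso p) {E \<in> ec_curves p. has_2_torsion p E})"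

end

theory Submission
  imports Defs
begin


lemma roots_unity_card_nat:
  fixes n k :: nat
  assumes n: "prime n" and k: "k > 0"
  shows "card {x\<in>{1..<n}. [x ^ k = 1] (mod n)} = gcd k (n - 1)"
proof -
  define e where "e = gcd k (n - 1)"
  have n1: "n > 1" using n prime_gt_1_nat by blast
  have e0: "e > 0" using k e_def by simp
  have edvd: "e dvd n - 1" "e dvd k" using e_def by auto
  have eq: "{x\<in>{1..<n}. [x ^ k = 1] (mod n)} = {x\<in>{..<n}. [x ^ e = 1] (mod n)}"
  proof (intro equalityI subsetI)
    fix x assume "x \<in> {x\<in>{1..<n}. [x ^ k = 1] (mod n)}"
    hence x: "x < n" "[x ^ k = 1] (mod n)" by auto
    hence "ord n x dvd k" using ord_divides' by simp
    moreover have "coprime n x"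
    proof (rule ccontr)
      assume "\<not> coprime n x" hence "ord n x = 0" using ord_eq_0 by blast
      with \<open>ord n x dvd k\<close> k show False by simp
    qed
    hence "ord n x dvd n - 1" using order_divides_totient totient_prime n by metis
    ultimately have "ord n x dvd e" using e_def by simp
    thus "x \<in> {x\<in>{..<n}. [x ^ e = 1] (mod n)}" using x ord_divides' by auto
  next
    fix x assume "x \<in> {x\<in>{..<n}. [x ^ e = 1] (mod n)}"
    hence x: "x < n" "[x ^ e = 1] (mod n)" by auto
    hence "ord n x dvd e" using ord_divides' by simp
    hence "ord n x dvd k" using edvd dvd_trans by blast
    hence k1: "[x ^ k = 1] (mod n)" using ord_divides' by simp
    have "x \<noteq> 0"
    proof
      assume "x = 0" with k1 k have "[0 = 1] (mod n)" by (simp add: zero_power)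
      thus False using n1 by (simp add: cong_def)
    qed
    thus "x \<in> {x\<in>{1..<n}. [x ^ k = 1] (mod n)}" using x k1 by auto
  qed
  have "card {x\<in>{..<n}. [x ^ e = 1] (mod n)} = e"
  proof (cases "e = 1")
    case True
    have "{x\<in>{..<n}. [x ^ e = 1] (mod n)} = {1}"
      using True n1 by (auto simp: cong_def)
    thus ?thesis using True by simp
  next
    case False
    have "card {x\<in>totatives n. ord n x = e} = totient e"
      using prime_card_elements_with_ord_eq_totient[OF n1 n, of e] edvd by simp
    also have "totient e > 0" using e0 by simp
    finally obtain a where a: "a \<in> totatives n" "ord n a = e"
      by (metis (mono_tags, lifting) card.empty empty_Collect_eq less_irrefl)
    have "a \<noteq> 1" using a False by auto
    have nz: "card {x\<in>totatives n. ord n x = e} \<noteq> 0"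
      using prime_card_elements_with_ord_eq_totient[OF n1 n, of e] edvd e0 by simp
    have "{x\<in>{..<n}. [x ^ e = 1] (mod n)} = (\<lambda>k. a ^ k mod n) ` {..<e}"
      using prime_elements_with_ord(2)[OF n1 nz n a \<open>a \<noteq> 1\<close>] by simp
    moreover have "inj_on (\<lambda>k. a ^ k mod n) {..<e}"
      using prime_elements_with_ord(1)[OF n1 nz n a \<open>a \<noteq> 1\<close>] by simp
    ultimately show ?thesis by (simp add: card_image)
  qed
  thus ?thesis using eq e_def by simp
qed



lemma roots_unity_card_int:
  fixes p :: int and k :: nat
  assumes p: "prime p" and k: "k > 0"
  shows "card {x\<in>{1..<p}. [x ^ k = 1] (mod p)} = gcd k (nat p - 1)"
proof -
  have p0: "p > 1" using p prime_gt_1_int by blast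
  have pn: "prime (nat p)" using p by simp
  have "{x\<in>{1..<p}. [x ^ k = 1] (mod p)} = int ` {x\<in>{1..<nat p}. [x ^ k = 1] (mod nat p)}"
  proof (intro equalityI subsetI)
    fix x assume "x \<in> {x\<in>{1..<p}. [x ^ k = 1] (mod p)}"
    hence x: "1 \<le> x" "x < p" "[x ^ k = 1] (mod p)" by auto
    hence "[int (nat x ^ k) = int 1] (mod int (nat p))" using p0 by simp
    hence "[nat x ^ k = 1] (mod nat p)" by (rule cong_int_iff[THEN iffD1])
    moreover have "x = int (nat x)" using x by simp
    ultimately show "x \<in> int ` {x\<in>{1..<nat p}. [x ^ k = 1] (mod nat p)}"
      using x by (intro image_eqI[of _ _ "nat x"]) auto
  next
    fix x assume "x \<in> int ` {x\<in>{1..<nat p}. [x ^ k = 1] (mod nat p)}"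
    then obtain y where y: "x = int y" "1 \<le> y" "y < nat p" "[y ^ k = 1] (mod nat p)" by auto
    hence "[int (y ^ k) = int 1] (mod int (nat p))" using y(4) cong_int_iff by blast
    hence "[int y ^ k = 1] (mod p)" using p0 by simp
    thus "x \<in> {x\<in>{1..<p}. [x ^ k = 1] (mod p)}" using y by auto
  qed
  also have "card \<dots> = card {x\<in>{1..<nat p}. [x ^ k = 1] (mod nat p)}"
    by (simp add: card_image)
  also have "\<dots> = gcd k (nat p - 1)" using roots_unity_card_nat[OF pn k] .
  finally show ?thesis .
qed

lemma mod_in_range: "(x::int) \<in> {0..<p} \<Longrightarrow> x mod p = x"
  by simp

lemma fiber_card:
  fixes p u :: int and k :: nat
  assumes p: "prime p" and k: "k > 0" and u: "u \<in> {1..<p}"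
  shows "card {v\<in>{1..<p}. [v ^ k = u ^ k] (mod p)} = gcd k (nat p - 1)"
proof -
  have p0: "p > 1" using p prime_gt_1_int by blast
  have nd: "\<not> p dvd v" if "v \<in> {1..<p}" for v using that zdvd_not_zless by auto
  have "coprime p u" using prime_imp_coprime[OF p nd[OF u]] .
  hence "coprime u p" by (simp add: coprime_commute)
  then obtain u' where u': "[u * u' = 1] (mod p)" using cong_solve_coprime_int by blast
  have "bij_betw (\<lambda>w. (u * w) mod p) {w\<in>{1..<p}. [w ^ k = 1] (mod p)} {v\<in>{1..<p}. [v ^ k = u ^ k] (mod p)}"
  proof (rule bij_betw_byWitness[where f' = "\<lambda>v. (u' * v) mod p"])
    show "\<forall>a\<in>{w \<in> {1..<p}. [w ^ k = 1] (mod p)}. u' * (u * a mod p) mod p = a"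
    proof
      fix a assume a: "a \<in> {w \<in> {1..<p}. [w ^ k = 1] (mod p)}"
      have "u' * (u * a mod p) mod p = (u' * (u * a)) mod p" by (rule mod_mult_right_eq)
      also have "\<dots> = ((u * u') * a) mod p" by (simp add: ac_simps)
      also have "\<dots> = (1 * a) mod p" using u' by (metis cong_def mod_mult_left_eq)
      finally show "u' * (u * a mod p) mod p = a" using a by simp
    qed
    show "\<forall>a\<in>{v \<in> {1..<p}. [v ^ k = u ^ k] (mod p)}. u * (u' * a mod p) mod p = a"
    proof
      fix a assume a: "a \<in> {v \<in> {1..<p}. [v ^ k = u ^ k] (mod p)}"
      have "u * (u' * a mod p) mod p = (u * (u' * a)) mod p" by (rule mod_mult_right_eq)
      also have "\<dots> = ((u * u') * a) mod p" by (simp add: ac_simps)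
      also have "\<dots> = (1 * a) mod p" using u' by (metis cong_def mod_mult_left_eq)
      finally show "u * (u' * a mod p) mod p = a" using a by simp
    qed
    show "(\<lambda>w. u * w mod p) ` {w \<in> {1..<p}. [w ^ k = 1] (mod p)} \<subseteq> {v \<in> {1..<p}. [v ^ k = u ^ k] (mod p)}"
    proof safe
      fix w assume w: "w \<in> {1..<p}" "[w ^ k = 1] (mod p)"
      have "\<not> p dvd u * w" using nd[OF u] nd[OF w(1)] p prime_dvd_mult_iff by blast
      hence "u * w mod p \<noteq> 0" by (simp add: dvd_eq_mod_eq_0)
      moreover have "u * w mod p \<ge> 0" "u * w mod p < p" using p0 by auto
      ultimately show "u * w mod p \<in> {1..<p}" by auto
      have "[(u * w mod p) ^ k = (u * w) ^ k] (mod p)" by (simp add: cong_def mod_simps)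
      also have "(u * w) ^ k = u ^ k * w ^ k" by (simp add: power_mult_distrib)
      also have "[u ^ k * w ^ k = u ^ k * 1] (mod p)" using w(2) by (intro cong_mult) auto
      finally show "[(u * w mod p) ^ k = u ^ k] (mod p)" by simp
    qed
    show "(\<lambda>v. u' * v mod p) ` {v \<in> {1..<p}. [v ^ k = u ^ k] (mod p)} \<subseteq> {w \<in> {1..<p}. [w ^ k = 1] (mod p)}"
    proof safe
      fix w assume w: "w \<in> {1..<p}" "[w ^ k = u ^ k] (mod p)"
      have "\<not> p dvd u'"
      proof
        assume "p dvd u'" hence "p dvd u * u'" by simp
        hence "(u * u') mod p = 0" by simp
        moreover have "(u * u') mod p = 1 mod p" using u' by (simp add: cong_def)
        ultimately show False using p0 by simp
      qed
      hence "\<not> p dvd u' * w" using nd[OF w(1)] p prime_dvd_mult_iff by blast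
      hence "u' * w mod p \<noteq> 0" by (simp add: dvd_eq_mod_eq_0)
      moreover have "u' * w mod p \<ge> 0" "u' * w mod p < p" using p0 by auto
      ultimately show "u' * w mod p \<in> {1..<p}" by auto
      have "[(u' * w mod p) ^ k = (u' * w) ^ k] (mod p)" by (simp add: cong_def mod_simps)
      also have "(u' * w) ^ k = u' ^ k * w ^ k" by (simp add: power_mult_distrib)
      also have "[u' ^ k * w ^ k = u' ^ k * u ^ k] (mod p)" using w(2) by (intro cong_mult) auto
      also have "u' ^ k * u ^ k = (u * u') ^ k" by (simp add: power_mult_distrib ac_simps)
      also have "[(u * u') ^ k = 1 ^ k] (mod p)" using u' by (intro cong_pow)
      finally show "[(u' * w mod p) ^ k = 1] (mod p)" by simp
    qed
  qed
  hence "card {v\<in>{1..<p}. [v ^ k = u ^ k] (mod p)} = card {w\<in>{1..<p}. [w ^ k = 1] (mod p)}"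
    by (simp add: bij_betw_same_card)
  also have "\<dots> = gcd k (nat p - 1)" using roots_unity_card_int[OF p k] .
  finally show ?thesis .
qed



definition rts :: "int \<Rightarrow> int \<times> int \<Rightarrow> int set" where
  "rts p E = (case E of (a, b) \<Rightarrow> {x\<in>{0..<p}. p dvd (x ^ 3 + a * x + b)})"

definition GG :: "int \<Rightarrow> (int \<times> int) set" where
  "GG p = {E \<in> ec_curves p. has_2_torsion p E}"

lemma F_eq: "x \<in> {0..<p} \<Longrightarrow> y \<in> {0..<p} \<Longrightarrow> (p::int) dvd (x - y) \<Longrightarrow> x = y"
proof -
  assume a: "x \<in> {0..<p}" "y \<in> {0..<p}" "p dvd (x - y)"
  hence "x mod p = y mod p" by (simp only: mod_eq_dvd_iff)
  thus "x = y" using a by simp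
qed

lemma dvd_transfer: "(p::int) dvd (X - Y) \<Longrightarrow> p dvd X \<longleftrightarrow> p dvd Y"
  using dvd_add[of p "X-Y" Y] dvd_diff[of p X "X-Y"] by auto

lemma prime_dvd_sq: "prime (p::int) \<Longrightarrow> p dvd x ^ 2 \<longleftrightarrow> p dvd x"
  by (simp add: prime_dvd_power_iff)

lemma has2_iff:
  assumes p: "prime p" "p > 3"
  shows "has_2_torsion p (a, b) \<longleftrightarrow> rts p (a, b) \<noteq> {}"
proof
  assume "has_2_torsion p (a, b)"
  then obtain x y where c: "on_curve p (a, b) (x, y)" "y mod p = (- y) mod p"
    unfolding has_2_torsion_def by blast
  hence xy: "x \<in> {0..<p}" "y \<in> {0..<p}" "p dvd (y ^ 2 - (x ^ 3 + a * x + b))"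
    unfolding on_curve_def by auto
  have "p dvd (y - (- y))" using c(2) mod_eq_dvd_iff by blast
  hence "p dvd 2 * y" by simp
  moreover have "\<not> p dvd 2"
    using p zdvd_not_zless[of 2 p] by simp
  ultimately have "p dvd y" using p prime_dvd_mult_iff by blast
  hence "y = 0" using xy F_eq[of y p 0] by simp
  hence "p dvd - (x ^ 3 + a * x + b)" using xy(3) by simp
  hence "p dvd (x ^ 3 + a * x + b)" by (simp only: dvd_minus_iff)
  thus "rts p (a, b) \<noteq> {}" using xy(1) unfolding rts_def by auto
next
  assume "rts p (a, b) \<noteq> {}"
  then obtain x where x: "x \<in> {0..<p}" "p dvd (x ^ 3 + a * x + b)" unfolding rts_def by auto
  have "(0::int) ^ 2 - (x ^ 3 + a * x + b) = - (x ^ 3 + a * x + b)" by simp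
  hence "p dvd (0::int) ^ 2 - (x ^ 3 + a * x + b)" using x(2) by (simp only: dvd_minus_iff)
  hence "((0::int) ^ 2 - (x ^ 3 + a * x + b)) mod p = 0" by (simp only: dvd_eq_mod_eq_0)
  hence "on_curve p (a, b) (x, 0)" using x p unfolding on_curve_def by auto
  thus "has_2_torsion p (a, b)" unfolding has_2_torsion_def by fastforce
qed

lemma GG_iff:
  assumes p: "prime p" "p > 3"
  shows "(a, b) \<in> GG p \<longleftrightarrow> a \<in> {0..<p} \<and> b \<in> {0..<p} \<and> \<not> p dvd (4 * a ^ 3 + 27 * b ^ 2) \<and> rts p (a, b) \<noteq> {}"
  unfolding GG_def ec_curves_def using has2_iff[OF p] by auto

lemma finite_GG: "finite (GG p)"
proof -
  have "GG p \<subseteq> {0..<p} \<times> {0..<p}" unfolding GG_def ec_curves_def by auto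
  thus ?thesis by (rule finite_subset) auto
qed

lemma finite_rts: "finite (rts p E)"
proof -
  have "rts p E \<subseteq> {0..<p}" unfolding rts_def by (cases E) auto
  thus ?thesis by (rule finite_subset) auto
qed



lemma small_ndvd:
  assumes p: "prime (p::int)" "p > 3"
  shows "\<not> p dvd 2" "\<not> p dvd 3" "\<not> p dvd 4" "\<not> p dvd 9" "\<not> p dvd 8"
proof -
  show a: "\<not> p dvd 2" using p zdvd_not_zless[of 2 p] by simp
  show b: "\<not> p dvd 3" using p zdvd_not_zless[of 3 p] by simp
  have "(4::int) = 2 * 2" "(9::int) = 3 * 3" "(8::int) = 2 * (2 * 2)" by simp_all
  thus "\<not> p dvd 4" "\<not> p dvd 9" "\<not> p dvd 8" using a b p(1) prime_dvd_mult_iff by metis+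
qed

lemma inv_exists:
  assumes p: "prime (p::int)" and k: "\<not> p dvd k"
  shows "\<exists>i. [k * i = 1] (mod p)"
proof -
  have "coprime p k" using prime_imp_coprime[OF p k] .
  hence "coprime k p" by (simp add: coprime_commute)
  thus ?thesis using cong_solve_coprime_int by blast
qed

lemma cong_mod_self: "[(A::int) mod p = A] (mod p)"
  by (simp add: cong_def)

lemma mod_range: "(p::int) > 0 \<Longrightarrow> A mod p \<in> {0..<p}"
  by simp

lemma cong_F_eq: "x \<in> {0..<p} \<Longrightarrow> y \<in> {0..<p} \<Longrightarrow> [x = y] (mod (p::int)) \<Longrightarrow> x = y"
  by (simp add: cong_def)

lemma disc_param:
  fixes p a b c x :: int
  assumes "[a = c - x ^ 2] (mod p)" "[b = - (x * c)] (mod p)"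
  shows "[4 * a ^ 3 + 27 * b ^ 2 = - ((x ^ 2 - 4 * c) * (2 * x ^ 2 + c) ^ 2)] (mod p)"
proof -
  have "[4 * a ^ 3 + 27 * b ^ 2 = 4 * (c - x ^ 2) ^ 3 + 27 * (- (x * c)) ^ 2] (mod p)"
    using assms by (intro cong_add cong_mult cong_pow cong_refl)
  also have "4 * (c - x ^ 2) ^ 3 + 27 * (- (x * c)) ^ 2 = - ((x ^ 2 - 4 * c) * (2 * x ^ 2 + c) ^ 2)"
    by (simp add: algebra_simps power2_eq_square power3_eq_cube)
  finally show ?thesis .
qed

lemma root_param:
  fixes p a b c x :: int
  assumes "[a = c - x ^ 2] (mod p)" "[b = - (x * c)] (mod p)"
  shows "p dvd (x ^ 3 + a * x + b)"
proof -
  have "[x ^ 3 + a * x + b = x ^ 3 + (c - x ^ 2) * x + (- (x * c))] (mod p)"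
    using assms by (intro cong_add cong_mult cong_refl)
  also have "x ^ 3 + (c - x ^ 2) * x + (- (x * c)) = 0" by (simp add: algebra_simps power2_eq_square power3_eq_cube)
  finally show ?thesis by (simp add: cong_0_iff)
qed

lemma ndvd_prod3:
  assumes "prime (p::int)"
  shows "\<not> p dvd (- (u * v ^ 2)) \<longleftrightarrow> \<not> p dvd u \<and> \<not> p dvd v"
  using assms by (simp add: prime_dvd_mult_iff prime_dvd_power_iff)

definition CC :: "int \<Rightarrow> (int \<times> int) set" where
  "CC p = {(x, c). x \<in> {0..<p} \<and> c \<in> {0..<p} \<and> \<not> p dvd (2 * x ^ 2 + c) \<and> \<not> p dvd (x ^ 2 - 4 * c)}"

lemma bij_CC:
  assumes p: "prime p" "p > 3"
  shows "bij_betw (\<lambda>(x, c). (((c - x ^ 2) mod p, (- (x * c)) mod p), x)) (CC p) (Sigma (GG p) (rts p))"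
proof (rule bij_betw_byWitness[where f' = "\<lambda>((a, b), x). (x, (a + x ^ 2) mod p)"])
  have p0: "p > 0" using p by simp
  show "\<forall>a\<in>CC p. (case case a of (x, c) \<Rightarrow> (((c - x\<^sup>2) mod p, - (x * c) mod p), x) of
          (x, xa) \<Rightarrow> (case x of (a, b) \<Rightarrow> \<lambda>x. (x, (a + x\<^sup>2) mod p)) xa) = a"
  proof (intro ballI)
    fix z assume z: "z \<in> CC p"
    obtain x c where zz: "z = (x, c)" by (metis prod.collapse)
    hence c: "c \<in> {0..<p}" using z unfolding CC_def by auto
    have "[(c - x\<^sup>2) mod p + x\<^sup>2 = c - x\<^sup>2 + x\<^sup>2] (mod p)"
      by (intro cong_add cong_mod_self cong_refl)
    hence "((c - x\<^sup>2) mod p + x\<^sup>2) mod p = c" using c by (simp add: cong_def)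
    thus "(case case z of (x, c) \<Rightarrow> (((c - x\<^sup>2) mod p, - (x * c) mod p), x) of
          (x, xa) \<Rightarrow> (case x of (a, b) \<Rightarrow> \<lambda>x. (x, (a + x\<^sup>2) mod p)) xa) = z" unfolding zz by simp
  qed
  show "\<forall>a\<in>Sigma (GG p) (rts p). (case case a of (x, xa) \<Rightarrow> (case x of (a, b) \<Rightarrow> \<lambda>x. (x, (a + x\<^sup>2) mod p)) xa of
          (x, c) \<Rightarrow> (((c - x\<^sup>2) mod p, - (x * c) mod p), x)) = a"
  proof (intro ballI)
    fix z assume z: "z \<in> Sigma (GG p) (rts p)"
    obtain a b x where zz: "z = ((a, b), x)" by (metis prod.collapse)
    have ab: "(a, b) \<in> GG p" and x: "x \<in> rts p (a, b)" using z zz by auto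
    have abF: "a \<in> {0..<p}" "b \<in> {0..<p}" using ab GG_iff[OF p] by auto
    have xr: "p dvd (x ^ 3 + a * x + b)" using x unfolding rts_def by auto
    define c where "c = (a + x\<^sup>2) mod p"
    have cc: "[c = a + x\<^sup>2] (mod p)" unfolding c_def by (rule cong_mod_self)
    have "[c - x\<^sup>2 = a + x\<^sup>2 - x\<^sup>2] (mod p)" using cc by (intro cong_diff cong_refl)
    hence e1: "(c - x\<^sup>2) mod p = a" using abF by (simp add: cong_def)
    have e2: "(- (x * c)) mod p = b"
    proof -
      have "[- (x * c) = - (x * (a + x\<^sup>2))] (mod p)" using cc by (intro cong_uminus cong_mult cong_refl)
      also have "- (x * (a + x\<^sup>2)) = b - (x ^ 3 + a * x + b)" by (simp add: algebra_simps power2_eq_square power3_eq_cube)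
      also have "[b - (x ^ 3 + a * x + b) = b - 0] (mod p)" using xr
        by (intro cong_diff cong_refl) (simp add: cong_0_iff)
      finally show ?thesis using abF by (simp add: cong_def)
    qed
    show "(case case z of (x, xa) \<Rightarrow> (case x of (a, b) \<Rightarrow> \<lambda>x. (x, (a + x\<^sup>2) mod p)) xa of
          (x, c) \<Rightarrow> (((c - x\<^sup>2) mod p, - (x * c) mod p), x)) = z"
      using e1 e2 unfolding zz c_def by simp
  qed
  show "(\<lambda>(x, c). (((c - x\<^sup>2) mod p, - (x * c) mod p), x)) ` CC p \<subseteq> Sigma (GG p) (rts p)"
  proof safe
    fix x c assume xc: "(x, c) \<in> CC p"
    hence xcF: "x \<in> {0..<p}" "c \<in> {0..<p}" and nd: "\<not> p dvd (2 * x ^ 2 + c)" "\<not> p dvd (x ^ 2 - 4 * c)"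
      unfolding CC_def by auto
    define a where "a = (c - x\<^sup>2) mod p"
    define b where "b = (- (x * c)) mod p"
    have ca: "[a = c - x\<^sup>2] (mod p)" "[b = - (x * c)] (mod p)" unfolding a_def b_def by (rule cong_mod_self)+
    have "\<not> p dvd (- ((x ^ 2 - 4 * c) * (2 * x ^ 2 + c) ^ 2))" using ndvd_prod3[OF p(1)] nd by blast
    hence "\<not> p dvd (4 * a ^ 3 + 27 * b ^ 2)" using disc_param[OF ca] cong_dvd_iff by blast
    moreover have "p dvd (x ^ 3 + a * x + b)" using root_param[OF ca] .
    ultimately have "(a, b) \<in> GG p" "x \<in> rts p (a, b)" using GG_iff[OF p] xcF p0 unfolding a_def b_def rts_def
      by auto
    thus "((c - x\<^sup>2) mod p, - (x * c) mod p) \<in> GG p" "x \<in> rts p ((c - x\<^sup>2) mod p, - (x * c) mod p)"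
      unfolding a_def b_def by auto
  qed
  show "(\<lambda>((a, b), x). (x, (a + x\<^sup>2) mod p)) ` Sigma (GG p) (rts p) \<subseteq> CC p"
  proof safe
    fix a b x assume ab: "(a, b) \<in> GG p" and x: "x \<in> rts p (a, b)"
    have disc: "\<not> p dvd (4 * a ^ 3 + 27 * b ^ 2)" using ab GG_iff[OF p] by auto
    have xr: "p dvd (x ^ 3 + a * x + b)" and xF: "x \<in> {0..<p}" using x unfolding rts_def by auto
    define c where "c = (a + x\<^sup>2) mod p"
    have cc: "[c = a + x\<^sup>2] (mod p)" unfolding c_def by (rule cong_mod_self)
    have ca: "[a = c - x\<^sup>2] (mod p)"
    proof -
      have "[c - x\<^sup>2 = a + x\<^sup>2 - x\<^sup>2] (mod p)" using cc by (intro cong_diff cong_refl)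
      thus ?thesis by (simp add: cong_sym)
    qed
    have cb: "[b = - (x * c)] (mod p)"
    proof -
      have "[- (x * c) = - (x * (a + x\<^sup>2))] (mod p)" using cc by (intro cong_uminus cong_mult cong_refl)
      also have "- (x * (a + x\<^sup>2)) = b - (x ^ 3 + a * x + b)" by (simp add: algebra_simps power2_eq_square power3_eq_cube)
      also have "[b - (x ^ 3 + a * x + b) = b - 0] (mod p)" using xr
        by (intro cong_diff cong_refl) (simp add: cong_0_iff)
      finally show ?thesis by (simp add: cong_sym)
    qed
    have "\<not> p dvd (- ((x ^ 2 - 4 * c) * (2 * x ^ 2 + c) ^ 2))" using disc disc_param[OF ca cb] cong_dvd_iff by blast
    hence "\<not> p dvd (2 * x ^ 2 + c)" "\<not> p dvd (x ^ 2 - 4 * c)" using ndvd_prod3[OF p(1)] by blast+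
    moreover have "c \<in> {0..<p}" unfolding c_def using p0 by simp
    ultimately show "(x, (a + x\<^sup>2) mod p) \<in> CC p" using xF unfolding CC_def c_def by auto
  qed
qed



lemma card_F_minus:
  assumes "S \<subseteq> {0..<(p::int)}"
  shows "int (card ({0..<p} - S)) = int (card {0..<p}) - int (card S)"
proof -
  have "finite S" using assms finite_subset by blast
  hence "card ({0..<p} - S) = card {0..<p} - card S" using assms by (simp add: card_Diff_subset)
  moreover have "card S \<le> card {0..<p}" using assms card_mono[of "{0..<p}" S] by blast
  ultimately show ?thesis by simp
qed

lemma card_F: "(p::int) \<ge> 0 \<Longrightarrow> int (card {0..<p}) = p" by simp
lemma card_F1: "(p::int) \<ge> 1 \<Longrightarrow> int (card {1..<p}) = p - 1" by simp

lemma sum_F_split: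
  fixes f :: "int \<Rightarrow> int"
  assumes p: "(p::int) > 0" and f: "\<And>x. x \<in> {1..<p} \<Longrightarrow> f x = K"
  shows "(\<Sum>x\<in>{0..<p}. f x) = f 0 + (p - 1) * K"
proof -
  have "{0..<p} = insert 0 {1..<p}" using p by auto
  hence "(\<Sum>x\<in>{0..<p}. f x) = f 0 + (\<Sum>x\<in>{1..<p}. f x)" by simp
  also have "(\<Sum>x\<in>{1..<p}. f x) = (\<Sum>x\<in>{1..<p}. K)" using f by simp
  also have "\<dots> = (p - 1) * K" using p by simp
  finally show ?thesis .
qed

lemma card_CC:
  assumes p: "prime p" "p > 3"
  shows "int (card (CC p)) = (p - 1) ^ 2"
proof -
  have p0: "p > 0" using p by simp
  obtain i4 where i4: "[4 * i4 = 1] (mod p)" using inv_exists[OF p(1) small_ndvd(3)[OF p]] by blast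
  define Cx where "Cx x = {c\<in>{0..<p}. \<not> p dvd (2 * x ^ 2 + c) \<and> \<not> p dvd (x ^ 2 - 4 * c)}" for x
  have CCS: "CC p = Sigma {0..<p} Cx" unfolding CC_def Cx_def by auto
  have e1: "p dvd (2 * x ^ 2 + c) \<longleftrightarrow> c = (- 2 * x ^ 2) mod p" if c: "c \<in> {0..<p}" for x c
  proof -
    have "p dvd (2 * x ^ 2 + c) \<longleftrightarrow> [c = - 2 * x ^ 2] (mod p)" by (simp add: cong_iff_dvd_diff add.commute)
    also have "\<dots> \<longleftrightarrow> c = (- 2 * x ^ 2) mod p" using c by (simp add: cong_def)
    finally show ?thesis .
  qed
  have e2: "p dvd (x ^ 2 - 4 * c) \<longleftrightarrow> c = (i4 * x ^ 2) mod p" if c: "c \<in> {0..<p}" for x c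
  proof -
    have "p dvd (x ^ 2 - 4 * c) \<longleftrightarrow> [c = i4 * x ^ 2] (mod p)"
    proof
      assume "p dvd (x ^ 2 - 4 * c)"
      hence "[4 * c = x ^ 2] (mod p)" by (simp add: cong_iff_dvd_diff dvd_diff_commute)
      hence "[i4 * (4 * c) = i4 * x ^ 2] (mod p)" by (intro cong_mult cong_refl)
      moreover have "[i4 * (4 * c) = 1 * c] (mod p)"
        using i4 by (metis cong_scalar_right mult.assoc mult.commute)
      ultimately show "[c = i4 * x ^ 2] (mod p)" by (metis cong_sym cong_trans mult_1)
    next
      assume "[c = i4 * x ^ 2] (mod p)"
      hence "[4 * c = 4 * (i4 * x ^ 2)] (mod p)" by (intro cong_mult cong_refl)
      moreover have "[4 * (i4 * x ^ 2) = 1 * x ^ 2] (mod p)"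
        using i4 by (metis cong_scalar_right mult.assoc)
      ultimately have "[4 * c = x ^ 2] (mod p)" by (metis cong_trans mult_1)
      thus "p dvd (x ^ 2 - 4 * c)" by (simp add: cong_iff_dvd_diff dvd_diff_commute)
    qed
    also have "\<dots> \<longleftrightarrow> c = (i4 * x ^ 2) mod p" using c by (simp add: cong_def)
    finally show ?thesis .
  qed
  have CxE: "Cx x = {0..<p} - {(- 2 * x ^ 2) mod p, (i4 * x ^ 2) mod p}" for x
    unfolding Cx_def using e1 e2 by auto
  have c0: "int (card (Cx 0)) = p - 1"
  proof -
    have "Cx 0 = {0..<p} - {0}" unfolding CxE by simp
    thus ?thesis using card_F_minus[of "{0}" p] p0 by simp
  qed
  have c1: "int (card (Cx x)) = p - 2" if x: "x \<in> {1..<p}" for x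
  proof -
    have ne: "(- 2 * x ^ 2) mod p \<noteq> (i4 * x ^ 2) mod p"
    proof
      assume "(- 2 * x ^ 2) mod p = (i4 * x ^ 2) mod p"
      hence "[- 2 * x ^ 2 = i4 * x ^ 2] (mod p)" by (simp add: cong_def)
      hence "[4 * (- 2 * x ^ 2) = 4 * (i4 * x ^ 2)] (mod p)" by (rule cong_mult[OF cong_refl])
      moreover have "[4 * (i4 * x ^ 2) = 1 * x ^ 2] (mod p)"
        using i4 by (metis cong_scalar_right mult.assoc)
      ultimately have "[4 * (- 2 * x ^ 2) = 1 * x ^ 2] (mod p)" by (rule cong_trans)
      hence "p dvd (4 * (- 2 * x ^ 2) - 1 * x ^ 2)" by (simp add: cong_iff_dvd_diff)
      also have "4 * (- 2 * x ^ 2) - 1 * x ^ 2 = - (9 * x ^ 2)" by simp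
      finally have "p dvd 9 * x ^ 2" by simp
      hence "p dvd x" using small_ndvd(4)[OF p] p(1) by (simp add: prime_dvd_mult_iff prime_dvd_power_iff)
      thus False using x zdvd_not_zless by auto
    qed
    have "int (card (Cx x)) = p - int (card {(- 2 * x ^ 2) mod p, (i4 * x ^ 2) mod p})"
      unfolding CxE using card_F_minus[of "{(- 2 * x ^ 2) mod p, (i4 * x ^ 2) mod p}" p] p0 by simp
    also have "int (card {(- 2 * x ^ 2) mod p, (i4 * x ^ 2) mod p}) = 2" using ne by simp
    finally show ?thesis .
  qed
  have "int (card (CC p)) = (\<Sum>x\<in>{0..<p}. int (card (Cx x)))"
    unfolding CCS by (subst card_SigmaI) (auto simp: CxE)
  also have "\<dots> = int (card (Cx 0)) + (p - 1) * (p - 2)" using sum_F_split[OF p0 c1] by simp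
  also have "\<dots> = (p - 1) ^ 2" using c0 by (simp add: power2_eq_square algebra_simps)
  finally show ?thesis .
qed

lemma card_A:
  assumes p: "prime p" "p > 3"
  shows "int (card (Sigma (GG p) (rts p))) = (p - 1) ^ 2"
  using bij_betw_same_card[OF bij_CC[OF p]] card_CC[OF p] by simp



lemma disc2:
  fixes p a b x y :: int
  assumes "[a = - (x ^ 2 + x * y + y ^ 2)] (mod p)" "[b = x * y * (x + y)] (mod p)"
  shows "[4 * a ^ 3 + 27 * b ^ 2 = - ((x - y) ^ 2 * ((x + 2 * y) ^ 2 * (2 * x + y) ^ 2))] (mod p)"
proof -
  have "[4 * a ^ 3 + 27 * b ^ 2 = 4 * (- (x ^ 2 + x * y + y ^ 2)) ^ 3 + 27 * (x * y * (x + y)) ^ 2] (mod p)"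
    using assms by (intro cong_add cong_mult cong_pow cong_refl)
  also have "4 * (- (x ^ 2 + x * y + y ^ 2)) ^ 3 + 27 * (x * y * (x + y)) ^ 2 = - ((x - y) ^ 2 * ((x + 2 * y) ^ 2 * (2 * x + y) ^ 2))"
    by (simp add: algebra_simps power2_eq_square power3_eq_cube)
  finally show ?thesis .
qed

lemma roots2:
  fixes p a b x y :: int
  assumes "[a = - (x ^ 2 + x * y + y ^ 2)] (mod p)" "[b = x * y * (x + y)] (mod p)"
  shows "p dvd (x ^ 3 + a * x + b)" "p dvd (y ^ 3 + a * y + b)"
proof -
  have "[x ^ 3 + a * x + b = x ^ 3 + (- (x ^ 2 + x * y + y ^ 2)) * x + x * y * (x + y)] (mod p)"
    using assms by (intro cong_add cong_mult cong_refl)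
  also have "x ^ 3 + (- (x ^ 2 + x * y + y ^ 2)) * x + x * y * (x + y) = 0"
    by (simp add: algebra_simps power2_eq_square power3_eq_cube)
  finally show "p dvd (x ^ 3 + a * x + b)" by (simp add: cong_0_iff)
  have "[y ^ 3 + a * y + b = y ^ 3 + (- (x ^ 2 + x * y + y ^ 2)) * y + x * y * (x + y)] (mod p)"
    using assms by (intro cong_add cong_mult cong_refl)
  also have "y ^ 3 + (- (x ^ 2 + x * y + y ^ 2)) * y + x * y * (x + y) = 0"
    by (simp add: algebra_simps power2_eq_square power3_eq_cube)
  finally show "p dvd (y ^ 3 + a * y + b)" by (simp add: cong_0_iff)
qed

lemma two_roots:
  fixes p a b x y :: int
  assumes p: "prime p" and xr: "p dvd (x ^ 3 + a * x + b)" and yr: "p dvd (y ^ 3 + a * y + b)"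
    and ne: "\<not> p dvd (x - y)"
  shows "[a = - (x ^ 2 + x * y + y ^ 2)] (mod p)" "[b = x * y * (x + y)] (mod p)"
proof -
  have "p dvd ((x ^ 3 + a * x + b) - (y ^ 3 + a * y + b))" using xr yr by (rule dvd_diff)
  also have "(x ^ 3 + a * x + b) - (y ^ 3 + a * y + b) = (x - y) * (x ^ 2 + x * y + y ^ 2 + a)"
    by (simp add: algebra_simps power2_eq_square power3_eq_cube)
  finally have "p dvd (x ^ 2 + x * y + y ^ 2 + a)" using ne p by (simp add: prime_dvd_mult_iff)
  moreover have "a - (- (x ^ 2 + x * y + y ^ 2)) = x ^ 2 + x * y + y ^ 2 + a" by simp
  ultimately show ca: "[a = - (x ^ 2 + x * y + y ^ 2)] (mod p)" by (simp only: cong_iff_dvd_diff)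
  have "b - (b - (x ^ 3 + a * x + b)) = x ^ 3 + a * x + b" by simp
  hence "[b = b - (x ^ 3 + a * x + b)] (mod p)" using xr by (simp only: cong_iff_dvd_diff)
  also have "b - (x ^ 3 + a * x + b) = - (x ^ 3) - a * x" by simp
  also have "[- (x ^ 3) - a * x = - (x ^ 3) - (- (x ^ 2 + x * y + y ^ 2)) * x] (mod p)"
    using ca by (intro cong_diff cong_mult cong_refl)
  also have "- (x ^ 3) - (- (x ^ 2 + x * y + y ^ 2)) * x = x * y * (x + y)"
    by (simp add: algebra_simps power2_eq_square power3_eq_cube)
  finally show "[b = x * y * (x + y)] (mod p)" .
qed

definition DD :: "int \<Rightarrow> (int \<times> int) set" where
  "DD p = {(x, y). x \<in> {0..<p} \<and> y \<in> {0..<p} \<and> x \<noteq> y \<and> \<not> p dvd (2 * x + y) \<and> \<not> p dvd (x + 2 * y)}"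

definition BB :: "int \<Rightarrow> ((int \<times> int) \<times> (int \<times> int)) set" where
  "BB p = Sigma (GG p) (\<lambda>E. Sigma (rts p E) (\<lambda>x. rts p E - {x}))"

lemma ndvd_F: "x \<in> {0..<p} \<Longrightarrow> y \<in> {0..<p} \<Longrightarrow> x \<noteq> y \<Longrightarrow> \<not> (p::int) dvd (x - y)"
  using F_eq by blast

lemma ndvd_prod3':
  assumes "prime (p::int)"
  shows "\<not> p dvd (- (u ^ 2 * (v ^ 2 * w ^ 2))) \<longleftrightarrow> \<not> p dvd u \<and> \<not> p dvd v \<and> \<not> p dvd w"
  using assms by (simp add: prime_dvd_mult_iff prime_dvd_power_iff)

lemma bij_DD:
  assumes p: "prime p" "p > 3"
  shows "bij_betw (\<lambda>(x, y). (((- (x ^ 2 + x * y + y ^ 2)) mod p, (x * y * (x + y)) mod p), (x, y))) (DD p) (BB p)"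
proof (rule bij_betw_byWitness[where f' = snd])
  have p0: "p > 0" using p by simp
  show "\<forall>a\<in>DD p. snd (case a of (x, y) \<Rightarrow> ((- (x\<^sup>2 + x * y + y\<^sup>2) mod p, x * y * (x + y) mod p), x, y)) = a"
    by auto
  show "\<forall>a\<in>BB p. (case snd a of (x, y) \<Rightarrow> ((- (x\<^sup>2 + x * y + y\<^sup>2) mod p, x * y * (x + y) mod p), x, y)) = a"
  proof (intro ballI)
    fix z assume z: "z \<in> BB p"
    obtain a b x y where zz: "z = ((a, b), (x, y))" by (metis prod.collapse)
    have ab: "(a, b) \<in> GG p" and x: "x \<in> rts p (a, b)" and y: "y \<in> rts p (a, b)" "y \<noteq> x"
      using z zz unfolding BB_def by auto
    have abF: "a \<in> {0..<p}" "b \<in> {0..<p}" using ab GG_iff[OF p] by auto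
    have xr: "p dvd (x ^ 3 + a * x + b)" "x \<in> {0..<p}" using x unfolding rts_def by auto
    have yr: "p dvd (y ^ 3 + a * y + b)" "y \<in> {0..<p}" using y unfolding rts_def by auto
    have ne: "\<not> p dvd (x - y)" using ndvd_F xr(2) yr(2) y(2) by metis
    note tr = two_roots[OF p(1) xr(1) yr(1) ne]
    have "(- (x\<^sup>2 + x * y + y\<^sup>2)) mod p = a" using tr(1) abF by (simp add: cong_def)
    moreover have "(x * y * (x + y)) mod p = b" using tr(2) abF by (simp add: cong_def)
    ultimately show "(case snd z of (x, y) \<Rightarrow> ((- (x\<^sup>2 + x * y + y\<^sup>2) mod p, x * y * (x + y) mod p), x, y)) = z"
      unfolding zz by simp
  qed
  show "(\<lambda>(x, y). ((- (x\<^sup>2 + x * y + y\<^sup>2) mod p, x * y * (x + y) mod p), x, y)) ` DD p \<subseteq> BB p"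
  proof (intro subsetI)
    fix z assume "z \<in> (\<lambda>(x, y). ((- (x\<^sup>2 + x * y + y\<^sup>2) mod p, x * y * (x + y) mod p), x, y)) ` DD p"
    then obtain x y where xy: "(x, y) \<in> DD p" and zz: "z = ((- (x\<^sup>2 + x * y + y\<^sup>2) mod p, x * y * (x + y) mod p), x, y)"
      by auto
    have xyF: "x \<in> {0..<p}" "y \<in> {0..<p}" "x \<noteq> y" and nd: "\<not> p dvd (2 * x + y)" "\<not> p dvd (x + 2 * y)"
      using xy unfolding DD_def by auto
    define a where "a = (- (x\<^sup>2 + x * y + y\<^sup>2)) mod p"
    define b where "b = (x * y * (x + y)) mod p"
    have ca: "[a = - (x ^ 2 + x * y + y ^ 2)] (mod p)" "[b = x * y * (x + y)] (mod p)"
      unfolding a_def b_def by (rule cong_mod_self)+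
    have "\<not> p dvd (x - y)" using ndvd_F xyF by blast
    hence "\<not> p dvd (- ((x - y) ^ 2 * ((x + 2 * y) ^ 2 * (2 * x + y) ^ 2)))" using ndvd_prod3'[OF p(1)] nd by blast
    hence "\<not> p dvd (4 * a ^ 3 + 27 * b ^ 2)" using disc2[OF ca] cong_dvd_iff by blast
    moreover note roots2[OF ca]
    ultimately have "(a, b) \<in> GG p" "x \<in> rts p (a, b)" "y \<in> rts p (a, b)"
      using GG_iff[OF p] xyF p0 unfolding a_def b_def rts_def by auto
    thus "z \<in> BB p" using xyF(3) unfolding zz BB_def a_def b_def by auto
  qed
  show "snd ` BB p \<subseteq> DD p"
  proof (intro subsetI)
    fix w assume "w \<in> snd ` BB p"
    then obtain a b x y where w: "w = (x, y)" and ab: "(a, b) \<in> GG p" and x: "x \<in> rts p (a, b)"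
      and y: "y \<in> rts p (a, b)" "y \<noteq> x" unfolding BB_def by force
    have disc: "\<not> p dvd (4 * a ^ 3 + 27 * b ^ 2)" using ab GG_iff[OF p] by auto
    have xr: "p dvd (x ^ 3 + a * x + b)" "x \<in> {0..<p}" using x unfolding rts_def by auto
    have yr: "p dvd (y ^ 3 + a * y + b)" "y \<in> {0..<p}" using y unfolding rts_def by auto
    have ne: "\<not> p dvd (x - y)" using ndvd_F xr(2) yr(2) y(2) by metis
    note tr = two_roots[OF p(1) xr(1) yr(1) ne]
    have "\<not> p dvd (- ((x - y) ^ 2 * ((x + 2 * y) ^ 2 * (2 * x + y) ^ 2)))" using disc disc2[OF tr] cong_dvd_iff by blast
    hence "\<not> p dvd (2 * x + y)" "\<not> p dvd (x + 2 * y)" using ndvd_prod3'[OF p(1)] by blast+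
    thus "w \<in> DD p" using xr yr y(2) unfolding w DD_def by auto
  qed
qed



lemma card_DD:
  assumes p: "prime p" "p > 3"
  shows "int (card (DD p)) = (p - 1) * (p - 2)"
proof -
  have p0: "p > 0" using p by simp
  obtain i2 where i2: "[2 * i2 = 1] (mod p)" using inv_exists[OF p(1) small_ndvd(1)[OF p]] by blast
  define Dx where "Dx x = {y\<in>{0..<p}. y \<noteq> x \<and> \<not> p dvd (2 * x + y) \<and> \<not> p dvd (x + 2 * y)}" for x
  have DS: "DD p = Sigma {0..<p} Dx" unfolding DD_def Dx_def by auto
  have e1: "p dvd (2 * x + y) \<longleftrightarrow> y = (- 2 * x) mod p" if c: "y \<in> {0..<p}" for x y
  proof -
    have "y - (- 2 * x) = 2 * x + y" by simp
    hence "p dvd (2 * x + y) \<longleftrightarrow> [y = - 2 * x] (mod p)" by (simp only: cong_iff_dvd_diff)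
    also have "\<dots> \<longleftrightarrow> y = (- 2 * x) mod p" using c by (simp add: cong_def)
    finally show ?thesis .
  qed
  have e2: "p dvd (x + 2 * y) \<longleftrightarrow> y = (- i2 * x) mod p" if c: "y \<in> {0..<p}" for x y
  proof -
    have "p dvd (x + 2 * y) \<longleftrightarrow> [y = - i2 * x] (mod p)"
    proof
      assume "p dvd (x + 2 * y)"
      moreover have "2 * y - (- x) = x + 2 * y" by simp
      ultimately have "[2 * y = - x] (mod p)" by (simp only: cong_iff_dvd_diff)
      hence "[i2 * (2 * y) = i2 * (- x)] (mod p)" by (rule cong_mult[OF cong_refl])
      moreover have "[i2 * (2 * y) = 1 * y] (mod p)"
        using i2 by (metis cong_scalar_right mult.assoc mult.commute)
      ultimately have "[1 * y = i2 * (- x)] (mod p)" by (metis cong_sym cong_trans)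
      thus "[y = - i2 * x] (mod p)" by simp
    next
      assume "[y = - i2 * x] (mod p)"
      hence "[2 * y = 2 * (- i2 * x)] (mod p)" by (rule cong_mult[OF cong_refl])
      moreover have "[2 * (- i2 * x) = - (1 * x)] (mod p)"
      proof -
        have "[(2 * i2) * x = 1 * x] (mod p)" using i2 by (rule cong_scalar_right)
        hence "[- ((2 * i2) * x) = - (1 * x)] (mod p)" by (rule cong_uminus)
        thus ?thesis by (simp add: algebra_simps)
      qed
      ultimately have "[2 * y = - (1 * x)] (mod p)" by (rule cong_trans)
      hence "p dvd (2 * y - (- (1 * x)))" by (simp only: cong_iff_dvd_diff)
      thus "p dvd (x + 2 * y)" by (simp add: add.commute)
    qed
    also have "\<dots> \<longleftrightarrow> y = (- i2 * x) mod p" using c by (simp add: cong_def)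
    finally show ?thesis .
  qed
  have DxE: "Dx x = {0..<p} - {x, (- 2 * x) mod p, (- i2 * x) mod p}" for x
    unfolding Dx_def using e1 e2 by auto
  have c0: "int (card (Dx 0)) = p - 1"
  proof -
    have "Dx 0 = {0..<p} - {0}" unfolding DxE by simp
    thus ?thesis using card_F_minus[of "{0}" p] p0 by simp
  qed
  have c1: "int (card (Dx x)) = p - 3" if x: "x \<in> {1..<p}" for x
  proof -
    have nx: "\<not> p dvd (3 * x)" using x small_ndvd(2)[OF p] p(1) zdvd_not_zless
      by (auto simp: prime_dvd_mult_iff)
    have n1: "x \<noteq> (- 2 * x) mod p"
    proof
      assume "x = (- 2 * x) mod p"
      hence "[x = - 2 * x] (mod p)" using x by (simp add: cong_def)
      hence "p dvd (x - (- 2 * x))" by (simp only: cong_iff_dvd_diff)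
      thus False using nx by simp
    qed
    have n2: "x \<noteq> (- i2 * x) mod p"
    proof
      assume "x = (- i2 * x) mod p"
      hence "[x = - i2 * x] (mod p)" using x by (simp add: cong_def)
      hence "[2 * x = 2 * (- i2 * x)] (mod p)" by (rule cong_mult[OF cong_refl])
      moreover have "[2 * (- i2 * x) = - (1 * x)] (mod p)"
      proof -
        have "[(2 * i2) * x = 1 * x] (mod p)" using i2 by (rule cong_scalar_right)
        hence "[- ((2 * i2) * x) = - (1 * x)] (mod p)" by (rule cong_uminus)
        thus ?thesis by (simp add: algebra_simps)
      qed
      ultimately have "[2 * x = - (1 * x)] (mod p)" by (rule cong_trans)
      hence "p dvd (2 * x - (- (1 * x)))" by (simp only: cong_iff_dvd_diff)
      thus False using nx by simp
    qed
    have n3: "(- 2 * x) mod p \<noteq> (- i2 * x) mod p"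
    proof
      assume "(- 2 * x) mod p = (- i2 * x) mod p"
      hence "[- 2 * x = - i2 * x] (mod p)" by (simp add: cong_def)
      hence "[2 * (- 2 * x) = 2 * (- i2 * x)] (mod p)" by (rule cong_mult[OF cong_refl])
      moreover have "[2 * (- i2 * x) = - (1 * x)] (mod p)"
      proof -
        have "[(2 * i2) * x = 1 * x] (mod p)" using i2 by (rule cong_scalar_right)
        hence "[- ((2 * i2) * x) = - (1 * x)] (mod p)" by (rule cong_uminus)
        thus ?thesis by (simp add: algebra_simps)
      qed
      ultimately have "[2 * (- 2 * x) = - (1 * x)] (mod p)" by (rule cong_trans)
      hence "p dvd (2 * (- 2 * x) - (- (1 * x)))" by (simp only: cong_iff_dvd_diff)
      moreover have "2 * (- 2 * x) - (- (1 * x)) = - (3 * x)" by simp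
      ultimately show False using nx by simp
    qed
    have sub: "{x, (- 2 * x) mod p, (- i2 * x) mod p} \<subseteq> {0..<p}" using x p0 by auto
    have "int (card (Dx x)) = p - int (card {x, (- 2 * x) mod p, (- i2 * x) mod p})"
      unfolding DxE using card_F_minus[OF sub] p0 by simp
    also have "int (card {x, (- 2 * x) mod p, (- i2 * x) mod p}) = 3" using n1 n2 n3 by simp
    finally show ?thesis .
  qed
  have "int (card (DD p)) = (\<Sum>x\<in>{0..<p}. int (card (Dx x)))"
    unfolding DS by (subst card_SigmaI) (auto simp: DxE)
  also have "\<dots> = int (card (Dx 0)) + (p - 1) * (p - 3)" using sum_F_split[OF p0 c1] by simp
  also have "\<dots> = (p - 1) * (p - 2)" using c0 by (simp add: algebra_simps)
  finally show ?thesis .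
qed

lemma rts_card:
  assumes p: "prime p" "p > 3" and E: "E \<in> GG p"
  shows "card (rts p E) = 1 \<or> card (rts p E) = 3"
proof -
  obtain a b where ab: "E = (a, b)" by (metis prod.collapse)
  have p0: "p > 0" using p by simp
  have disc: "\<not> p dvd (4 * a ^ 3 + 27 * b ^ 2)" and ne: "rts p (a, b) \<noteq> {}" using E ab GG_iff[OF p] by auto
  then obtain x where x: "x \<in> rts p (a, b)" by blast
  show ?thesis
  proof (cases "rts p (a, b) = {x}")
    case True thus ?thesis using ab by simp
  next
    case False
    then obtain y where y: "y \<in> rts p (a, b)" "y \<noteq> x" using x by blast
    have xr: "p dvd (x ^ 3 + a * x + b)" "x \<in> {0..<p}" using x unfolding rts_def by auto
    have yr: "p dvd (y ^ 3 + a * y + b)" "y \<in> {0..<p}" using y unfolding rts_def by auto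
    have nexy: "\<not> p dvd (x - y)" using ndvd_F xr(2) yr(2) y(2) by metis
    note tr = two_roots[OF p(1) xr(1) yr(1) nexy]
    have "\<not> p dvd (- ((x - y) ^ 2 * ((x + 2 * y) ^ 2 * (2 * x + y) ^ 2)))" using disc disc2[OF tr] cong_dvd_iff by blast
    hence nd: "\<not> p dvd (2 * x + y)" "\<not> p dvd (x + 2 * y)" using ndvd_prod3'[OF p(1)] by blast+
    define z where "z = (- x - y) mod p"
    have zc: "[z = - x - y] (mod p)" unfolding z_def by (rule cong_mod_self)
    have fact: "[w ^ 3 + a * w + b = (w - x) * (w - y) * (w + x + y)] (mod p)" for w
    proof -
      have "[w ^ 3 + a * w + b = w ^ 3 + (- (x ^ 2 + x * y + y ^ 2)) * w + x * y * (x + y)] (mod p)"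
        using tr by (intro cong_add cong_mult cong_refl)
      also have "w ^ 3 + (- (x ^ 2 + x * y + y ^ 2)) * w + x * y * (x + y) = (w - x) * (w - y) * (w + x + y)"
        by (simp add: algebra_simps power2_eq_square power3_eq_cube)
      finally show ?thesis .
    qed
    have zF: "z \<in> {0..<p}" unfolding z_def using p0 by simp
    have zr: "p dvd (z ^ 3 + a * z + b)"
    proof -
      have "[(z - x) * (z - y) * (z + x + y) = (z - x) * (z - y) * ((- x - y) + x + y)] (mod p)"
        using zc by (intro cong_add cong_mult cong_refl)
      hence "[z ^ 3 + a * z + b = 0] (mod p)" using fact[of z] cong_trans by fastforce
      thus ?thesis by (simp add: cong_0_iff)
    qed
    have zx: "z \<noteq> x"
    proof
      assume "z = x" hence "[x = - x - y] (mod p)" using zc by simp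
      hence "p dvd (x - (- x - y))" by (simp only: cong_iff_dvd_diff)
      thus False using nd by (simp add: algebra_simps)
    qed
    have zy: "z \<noteq> y"
    proof
      assume "z = y" hence "[y = - x - y] (mod p)" using zc by simp
      hence "p dvd (y - (- x - y))" by (simp only: cong_iff_dvd_diff)
      thus False using nd by (simp add: algebra_simps)
    qed
    have "rts p (a, b) = {x, y, z}"
    proof (intro equalityI subsetI)
      fix w assume w: "w \<in> rts p (a, b)"
      hence wr: "p dvd (w ^ 3 + a * w + b)" "w \<in> {0..<p}" unfolding rts_def by auto
      hence "p dvd ((w - x) * (w - y) * (w + x + y))" using fact[of w] cong_dvd_iff by blast
      hence "p dvd (w - x) \<or> p dvd (w - y) \<or> p dvd (w + x + y)" using p(1) by (simp add: prime_dvd_mult_iff)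
      moreover have "p dvd (w + x + y) \<Longrightarrow> w = z"
      proof -
        assume "p dvd (w + x + y)"
        hence "[w = - x - y] (mod p)" by (simp add: cong_iff_dvd_diff algebra_simps)
        hence "[w = z] (mod p)" using zc cong_sym cong_trans by blast
        thus "w = z" using wr(2) zF by (rule cong_F_eq[rotated 2])
      qed
      ultimately show "w \<in> {x, y, z}" using F_eq[OF wr(2) xr(2)] F_eq[OF wr(2) yr(2)] by auto
    next
      fix w assume "w \<in> {x, y, z}"
      thus "w \<in> rts p (a, b)" using x y zr zF unfolding rts_def by auto
    qed
    hence "card (rts p (a, b)) = 3" using zx zy y(2) by auto
    thus ?thesis using ab by simp
  qed
qed

lemma card_GG:
  assumes p: "prime p" "p > 3"
  shows "3 * int (card (GG p)) = (p - 1) * (2 * p - 1)"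
proof -
  have fin: "finite (GG p)" by (rule finite_GG)
  have A: "card (Sigma (GG p) (rts p)) = (\<Sum>E\<in>GG p. card (rts p E))"
    using fin finite_rts by (simp add: card_SigmaI)
  have B: "card (BB p) = (\<Sum>E\<in>GG p. card (rts p E) * (card (rts p E) - 1))"
    unfolding BB_def using fin finite_rts by (simp add: card_SigmaI)
  have per: "3 * card (rts p E) = 3 + card (rts p E) * (card (rts p E) - 1)" if "E \<in> GG p" for E
    using rts_card[OF p that] by auto
  have "3 * card (Sigma (GG p) (rts p)) = (\<Sum>E\<in>GG p. 3 * card (rts p E))"
    unfolding A by (simp add: sum_distrib_left)
  also have "\<dots> = (\<Sum>E\<in>GG p. 3 + card (rts p E) * (card (rts p E) - 1))"
    using per by (rule sum.cong[OF refl])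
  also have "\<dots> = 3 * card (GG p) + card (BB p)" unfolding B by (simp add: sum.distrib)
  finally have "3 * int (card (Sigma (GG p) (rts p))) = 3 * int (card (GG p)) + int (card (BB p))"
    by (metis of_nat_add of_nat_mult of_nat_numeral)
  moreover have "int (card (BB p)) = (p - 1) * (p - 2)"
    using bij_betw_same_card[OF bij_DD[OF p]] card_DD[OF p] by simp
  ultimately show ?thesis using card_A[OF p] by (simp add: algebra_simps power2_eq_square)
qed



lemma card_quotient_sum:
  assumes eq: "equiv A r" and fin: "finite A"
  shows "real (card (A // r)) = (\<Sum>x\<in>A. 1 / real (card (r `` {x})))"
proof -
  have finQ: "finite (A // r)" using finite_quotient[OF fin equiv_type[OF eq]] .
  have finX: "\<forall>X\<in>A//r. finite X"
  proof
    fix X assume "X \<in> A//r" hence "X \<subseteq> A" by (rule in_quotient_imp_subset[OF eq])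
    thus "finite X" using fin by (rule finite_subset)
  qed
  have disj: "\<forall>X\<in>A//r. \<forall>Y\<in>A//r. X \<noteq> Y \<longrightarrow> X \<inter> Y = {}" using quotient_disj[OF eq] by blast
  have "(\<Sum>x\<in>A. 1 / real (card (r `` {x}))) = (\<Sum>x\<in>\<Union>(A//r). 1 / real (card (r `` {x})))"
    using Union_quotient[OF eq] by simp
  also have "\<dots> = (\<Sum>X\<in>A//r. \<Sum>x\<in>X. 1 / real (card (r `` {x})))"
    using sum.Union_disjoint[OF finX disj] by simp
  also have "\<dots> = (\<Sum>X\<in>A//r. 1)"
  proof (rule sum.cong[OF refl])
    fix X assume X: "X \<in> A // r"
    then obtain x0 where x0: "X = r `` {x0}" "x0 \<in> A" by (rule quotientE)
    have "(\<Sum>x\<in>X. 1 / real (card (r `` {x}))) = (\<Sum>x\<in>X. 1 / real (card X))"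
    proof (rule sum.cong[OF refl])
      fix x assume "x \<in> X"
      hence "(x0, x) \<in> r" using x0 by simp
      hence "r `` {x0} = r `` {x}" by (rule equiv_class_eq[OF eq])
      thus "1 / real (card (r `` {x})) = 1 / real (card X)" using x0 by simp
    qed
    also have "\<dots> = 1"
    proof -
      have "X \<noteq> {}" using in_quotient_imp_non_empty[OF eq X] .
      hence "card X > 0" using finX X by (simp add: card_gt_0_iff)
      thus ?thesis by simp
    qed
    finally show "(\<Sum>x\<in>X. 1 / real (card (r `` {x}))) = 1" .
  qed
  also have "\<dots> = real (card (A // r))" by simp
  finally show ?thesis by simp
qed

lemma image_fiber_card:
  assumes fin: "finite S" and m: "\<And>u. u \<in> S \<Longrightarrow> card {v\<in>S. f v = f u} = m"
  shows "card (f ` S) * m = card S"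
proof -
  have "S = (\<Union>y\<in>f ` S. {v\<in>S. f v = y})" by auto
  moreover have "card (\<Union>y\<in>f ` S. {v\<in>S. f v = y}) = (\<Sum>y\<in>f ` S. card {v\<in>S. f v = y})"
    by (rule card_UN_disjoint) (use fin in auto)
  ultimately have "card S = (\<Sum>y\<in>f ` S. card {v\<in>S. f v = y})" by simp
  also have "\<dots> = (\<Sum>y\<in>f ` S. m)"
  proof (rule sum.cong[OF refl])
    fix y assume "y \<in> f ` S" then obtain u where "u \<in> S" "y = f u" by auto
    thus "card {v\<in>S. f v = y} = m" using m by simp
  qed
  also have "\<dots> = card (f ` S) * m" by simp
  finally show ?thesis by simp
qed



definition act :: "int \<Rightarrow> int \<Rightarrow> int \<times> int \<Rightarrow> int \<times> int" where
  "act p u E = (case E of (a, b) \<Rightarrow> ((u ^ 4 * a) mod p, (u ^ 6 * b) mod p))"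

definition Rel :: "int \<Rightarrow> ((int \<times> int) \<times> (int \<times> int)) set" where
  "Rel p = Restr (ec_iso p) (GG p)"

lemma Fs_ndvd: "v \<in> {1..<p} \<Longrightarrow> \<not> (p::int) dvd v"
  using zdvd_not_zless by auto

lemma mod_Fs: "0 < (p::int) \<Longrightarrow> \<not> p dvd u \<Longrightarrow> u mod p \<in> {1..<p}"
proof -
  assume a: "0 < p" "\<not> p dvd u"
  have "u mod p \<ge> 0" "u mod p < p" using a by auto
  moreover have "u mod p \<noteq> 0" using a(2) mod_0_imp_dvd by blast
  ultimately show ?thesis by auto
qed

lemma Fs_mult:
  assumes p: "prime (p::int)" and u: "u \<in> {1..<p}" and v: "v \<in> {1..<p}"
  shows "(u * v) mod p \<in> {1..<p}"
proof -
  have "\<not> p dvd u * v" using Fs_ndvd[OF u] Fs_ndvd[OF v] p prime_dvd_mult_iff by blast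
  moreover have "p > 0" using p prime_gt_0_int by blast
  ultimately show ?thesis using mod_Fs by blast
qed

lemma act_GG:
  assumes p: "prime p" "p > 3" and E: "E \<in> GG p" and u: "u \<in> {1..<p}"
  shows "act p u E \<in> GG p"
proof -
  obtain a b where ab: "E = (a, b)" by (metis prod.collapse)
  have p0: "p > 0" using p by simp
  have disc: "\<not> p dvd (4 * a ^ 3 + 27 * b ^ 2)" and ne: "rts p (a, b) \<noteq> {}" using E ab GG_iff[OF p] by auto
  then obtain x where x: "x \<in> {0..<p}" "p dvd (x ^ 3 + a * x + b)" unfolding rts_def by auto
  define a' where "a' = (u ^ 4 * a) mod p"
  define b' where "b' = (u ^ 6 * b) mod p"
  have ca: "[a' = u ^ 4 * a] (mod p)" "[b' = u ^ 6 * b] (mod p)" unfolding a'_def b'_def by (rule cong_mod_self)+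
  have nu: "\<not> p dvd u" using Fs_ndvd[OF u] .
  have "[4 * a' ^ 3 + 27 * b' ^ 2 = 4 * (u ^ 4 * a) ^ 3 + 27 * (u ^ 6 * b) ^ 2] (mod p)"
    using ca by (intro cong_add cong_mult cong_pow cong_refl)
  also have "4 * (u ^ 4 * a) ^ 3 + 27 * (u ^ 6 * b) ^ 2 = u ^ 12 * (4 * a ^ 3 + 27 * b ^ 2)"
    by (simp add: algebra_simps power_mult_distrib power_mult[symmetric])
  finally have c1: "[4 * a' ^ 3 + 27 * b' ^ 2 = u ^ 12 * (4 * a ^ 3 + 27 * b ^ 2)] (mod p)" .
  have "\<not> p dvd u ^ 12 * (4 * a ^ 3 + 27 * b ^ 2)" using nu disc p(1) by (simp add: prime_dvd_mult_iff prime_dvd_power_iff)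
  hence d': "\<not> p dvd (4 * a' ^ 3 + 27 * b' ^ 2)" using c1 cong_dvd_iff by blast
  define x' where "x' = (u ^ 2 * x) mod p"
  have cx: "[x' = u ^ 2 * x] (mod p)" unfolding x'_def by (rule cong_mod_self)
  have "[x' ^ 3 + a' * x' + b' = (u ^ 2 * x) ^ 3 + (u ^ 4 * a) * (u ^ 2 * x) + u ^ 6 * b] (mod p)"
    using ca cx by (intro cong_add cong_mult cong_pow cong_refl)
  also have "(u ^ 2 * x) ^ 3 + (u ^ 4 * a) * (u ^ 2 * x) + u ^ 6 * b = u ^ 6 * (x ^ 3 + a * x + b)"
    by (simp add: algebra_simps power_mult_distrib power_mult[symmetric] power_add[symmetric])
  finally have "[x' ^ 3 + a' * x' + b' = u ^ 6 * (x ^ 3 + a * x + b)] (mod p)" .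
  moreover have "p dvd u ^ 6 * (x ^ 3 + a * x + b)" using x(2) by simp
  ultimately have r': "p dvd (x' ^ 3 + a' * x' + b')" using cong_dvd_iff by blast
  have "x' \<in> {0..<p}" "a' \<in> {0..<p}" "b' \<in> {0..<p}" unfolding x'_def a'_def b'_def using p0 by auto
  hence "(a', b') \<in> GG p" using d' r' GG_iff[OF p] unfolding rts_def by auto
  thus ?thesis unfolding act_def ab a'_def b'_def by simp
qed

lemma pow_mod_eq: "(((u::int) mod p) ^ k * a) mod p = (u ^ k * a) mod p"
proof -
  have "[(u mod p) ^ k * a = u ^ k * a] (mod p)" by (intro cong_mult cong_pow cong_mod_self cong_refl)
  thus ?thesis by (simp add: cong_def)
qed

lemma iso_iff:
  assumes p: "prime p" "p > 3" and E': "E' \<in> {0..<p} \<times> {0..<p}"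
  shows "(E, E') \<in> ec_iso p \<longleftrightarrow> (\<exists>u\<in>{1..<p}. E' = act p u E)"
proof -
  obtain a b where ab: "E = (a, b)" by (metis prod.collapse)
  obtain a' b' where ab': "E' = (a', b')" by (metis prod.collapse)
  have p0: "p > 0" using p by simp
  have F': "a' \<in> {0..<p}" "b' \<in> {0..<p}" using E' ab' by auto
  show ?thesis
  proof
    assume "(E, E') \<in> ec_iso p"
    then obtain u where u: "u mod p \<noteq> 0" "a' mod p = (u ^ 4 * a) mod p" "b' mod p = (u ^ 6 * b) mod p"
      unfolding ec_iso_def ab ab' by auto
    define w where "w = u mod p"
    have "\<not> p dvd u" using u(1) dvd_imp_mod_0 by blast
    hence w: "w \<in> {1..<p}" using p0 mod_Fs[of p u] unfolding w_def by auto
    have "a' = (w ^ 4 * a) mod p" using u(2) F' unfolding w_def pow_mod_eq by simp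
    moreover have "b' = (w ^ 6 * b) mod p" using u(3) F' unfolding w_def pow_mod_eq by simp
    ultimately show "\<exists>u\<in>{1..<p}. E' = act p u E" using w unfolding ab ab' act_def by auto
  next
    assume "\<exists>u\<in>{1..<p}. E' = act p u E"
    then obtain u where u: "u \<in> {1..<p}" "E' = act p u E" by blast
    hence "u mod p \<noteq> 0" "a' mod p = (u ^ 4 * a) mod p" "b' mod p = (u ^ 6 * b) mod p"
      unfolding ab ab' act_def by auto
    thus "(E, E') \<in> ec_iso p" unfolding ec_iso_def ab ab' by auto
  qed
qed

lemma GG_F: "E \<in> GG p \<Longrightarrow> E \<in> {0..<p} \<times> {0..<p}"
  unfolding GG_def ec_curves_def by auto

lemma act_1: "E \<in> {0..<p} \<times> {0..<p} \<Longrightarrow> act p 1 E = E"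
  unfolding act_def by auto

lemma act_comp:
  "act p v (act p u E) = act p ((u * v) mod p) E"
proof -
  obtain a b where ab: "E = (a, b)" by (metis prod.collapse)
  have "[v ^ 4 * ((u ^ 4 * a) mod p) = v ^ 4 * (u ^ 4 * a)] (mod p)"
    by (intro cong_mult cong_refl cong_mod_self)
  also have "v ^ 4 * (u ^ 4 * a) = (u * v) ^ 4 * a" by (simp add: power_mult_distrib ac_simps)
  also have "[(u * v) ^ 4 * a = ((u * v) mod p) ^ 4 * a] (mod p)"
    by (intro cong_mult cong_refl cong_pow cong_sym[OF cong_mod_self])
  finally have 1: "(v ^ 4 * ((u ^ 4 * a) mod p)) mod p = (((u * v) mod p) ^ 4 * a) mod p"
    by (simp add: cong_def)
  have "[v ^ 6 * ((u ^ 6 * b) mod p) = v ^ 6 * (u ^ 6 * b)] (mod p)"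
    by (intro cong_mult cong_refl cong_mod_self)
  also have "v ^ 6 * (u ^ 6 * b) = (u * v) ^ 6 * b" by (simp add: power_mult_distrib ac_simps)
  also have "[(u * v) ^ 6 * b = ((u * v) mod p) ^ 6 * b] (mod p)"
    by (intro cong_mult cong_refl cong_pow cong_sym[OF cong_mod_self])
  finally have 2: "(v ^ 6 * ((u ^ 6 * b) mod p)) mod p = (((u * v) mod p) ^ 6 * b) mod p"
    by (simp add: cong_def)
  show ?thesis using 1 2 unfolding ab act_def by simp
qed

lemma act_inv:
  assumes p: "prime p" "p > 3" and u: "u \<in> {1..<p}" and E: "E \<in> {0..<p} \<times> {0..<p}"
  shows "\<exists>w\<in>{1..<p}. act p w (act p u E) = E"
proof -
  have p0: "p > 0" using p by simp
  obtain v where v: "[u * v = 1] (mod p)" using inv_exists[OF p(1) Fs_ndvd[OF u]] by blast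
  have "\<not> p dvd v"
  proof
    assume "p dvd v" hence "p dvd u * v" by simp
    hence "(u * v) mod p = 0" by simp
    moreover have "(u * v) mod p = 1 mod p" using v by (simp add: cong_def)
    ultimately show False using p by simp
  qed
  hence w: "v mod p \<in> {1..<p}" using p0 mod_Fs by blast
  have "(u * (v mod p)) mod p = 1" using v p by (simp add: cong_def mod_simps)
  hence "act p (v mod p) (act p u E) = act p 1 E" by (simp add: act_comp)
  thus ?thesis using act_1[OF E] w by metis
qed

lemma Rel_iff:
  assumes p: "prime p" "p > 3"
  shows "(E, E') \<in> Rel p \<longleftrightarrow> E \<in> GG p \<and> (\<exists>u\<in>{1..<p}. E' = act p u E)"
proof
  assume "(E, E') \<in> Rel p"
  hence "(E, E') \<in> ec_iso p" "E \<in> GG p" "E' \<in> GG p" unfolding Rel_def by auto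
  thus "E \<in> GG p \<and> (\<exists>u\<in>{1..<p}. E' = act p u E)" using iso_iff[OF p GG_F] by blast
next
  assume a: "E \<in> GG p \<and> (\<exists>u\<in>{1..<p}. E' = act p u E)"
  then obtain u where u: "u \<in> {1..<p}" "E' = act p u E" by blast
  have "E' \<in> GG p" using act_GG[OF p _ u(1)] a u by simp
  moreover have "(E, E') \<in> ec_iso p" using iso_iff[OF p GG_F[OF \<open>E' \<in> GG p\<close>]] u by blast
  ultimately show "(E, E') \<in> Rel p" using a unfolding Rel_def by auto
qed

lemma equiv_Rel:
  assumes p: "prime p" "p > 3"
  shows "equiv (GG p) (Rel p)"
proof (rule equivI)
  show "Rel p \<subseteq> GG p \<times> GG p" unfolding Rel_def by auto
  show "refl_on (GG p) (Rel p)"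
  proof (rule refl_onI)
    fix E assume E: "E \<in> GG p"
    have "(1::int) \<in> {1..<p}" using p by simp
    thus "(E, E) \<in> Rel p" using Rel_iff[OF p] E act_1[OF GG_F[OF E]] by metis
  qed
  show "sym (Rel p)"
  proof (rule symI)
    fix E E' assume "(E, E') \<in> Rel p"
    then obtain u where E: "E \<in> GG p" and u: "u \<in> {1..<p}" "E' = act p u E" using Rel_iff[OF p] by blast
    have E': "E' \<in> GG p" using act_GG[OF p E u(1)] u by simp
    obtain w where "w \<in> {1..<p}" "act p w E' = E" using act_inv[OF p u(1) GG_F[OF E]] u by blast
    thus "(E', E) \<in> Rel p" using Rel_iff[OF p] E' by metis
  qed
  show "trans (Rel p)"
  proof (rule transI)
    fix E E' E'' assume "(E, E') \<in> Rel p" "(E', E'') \<in> Rel p"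
    then obtain u v where E: "E \<in> GG p" and u: "u \<in> {1..<p}" "E' = act p u E"
      and v: "v \<in> {1..<p}" "E'' = act p v E'" using Rel_iff[OF p] by metis
    have "E'' = act p ((u * v) mod p) E" using u v act_comp by simp
    moreover have "(u * v) mod p \<in> {1..<p}" using Fs_mult[OF p(1) u(1) v(1)] .
    ultimately show "(E, E'') \<in> Rel p" using Rel_iff[OF p] E by blast
  qed
qed

lemma class_eq:
  assumes p: "prime p" "p > 3" and E: "E \<in> GG p"
  shows "Rel p `` {E} = (\<lambda>u. act p u E) ` {1..<p}"
proof (intro equalityI subsetI)
  fix E' assume "E' \<in> Rel p `` {E}"
  hence "(E, E') \<in> Rel p" by simp
  then obtain u where "u \<in> {1..<p}" "E' = act p u E" using Rel_iff[OF p] by blast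
  thus "E' \<in> (\<lambda>u. act p u E) ` {1..<p}" by blast
next
  fix E' assume "E' \<in> (\<lambda>u. act p u E) ` {1..<p}"
  then obtain u where "u \<in> {1..<p}" "E' = act p u E" by blast
  hence "(E, E') \<in> Rel p" using Rel_iff[OF p] E by blast
  thus "E' \<in> Rel p `` {E}" by simp
qed



definition kk :: "int \<times> int \<Rightarrow> nat" where
  "kk E = (if fst E = 0 then 6 else if snd E = 0 then 4 else 2)"

lemma ndvd_coprime: "prime (p::int) \<Longrightarrow> \<not> p dvd k \<Longrightarrow> coprime k p"
  using prime_imp_coprime coprime_commute by blast

lemma F_ndvd: "x \<in> {0..<p} \<Longrightarrow> x \<noteq> 0 \<Longrightarrow> \<not> (p::int) dvd x"
  using zdvd_not_zless by auto

lemma fiber_act: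
  assumes p: "prime p" "p > 3" and E: "E \<in> GG p" and u: "u \<in> {1..<p}" and v: "v \<in> {1..<p}"
  shows "act p v E = act p u E \<longleftrightarrow> [v ^ kk E = u ^ kk E] (mod p)"
proof -
  obtain a b where ab: "E = (a, b)" by (metis prod.collapse)
  have F: "a \<in> {0..<p}" "b \<in> {0..<p}" and disc: "\<not> p dvd (4 * a ^ 3 + 27 * b ^ 2)"
    using E ab GG_iff[OF p] by auto
  have base: "act p v E = act p u E \<longleftrightarrow> [v ^ 4 * a = u ^ 4 * a] (mod p) \<and> [v ^ 6 * b = u ^ 6 * b] (mod p)"
    unfolding ab act_def by (simp add: cong_def)
  have ca: "[v ^ 4 * a = u ^ 4 * a] (mod p) \<longleftrightarrow> [v ^ 4 = u ^ 4] (mod p)" if "a \<noteq> 0"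
    using cong_mult_rcancel[OF ndvd_coprime[OF p(1) F_ndvd[OF F(1) that]]] .
  have cb: "[v ^ 6 * b = u ^ 6 * b] (mod p) \<longleftrightarrow> [v ^ 6 = u ^ 6] (mod p)" if "b \<noteq> 0"
    using cong_mult_rcancel[OF ndvd_coprime[OF p(1) F_ndvd[OF F(2) that]]] .
  show ?thesis
  proof (cases "a = 0")
    case True
    hence "b \<noteq> 0" using disc by auto
    thus ?thesis using True base cb unfolding kk_def ab by simp
  next
    case a0: False
    show ?thesis
    proof (cases "b = 0")
      case True
      thus ?thesis using a0 base ca unfolding kk_def ab by simp
    next
      case b0: False
      have "[v ^ 4 = u ^ 4] (mod p) \<and> [v ^ 6 = u ^ 6] (mod p) \<longleftrightarrow> [v ^ 2 = u ^ 2] (mod p)"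
      proof
        assume h: "[v ^ 4 = u ^ 4] (mod p) \<and> [v ^ 6 = u ^ 6] (mod p)"
        have "[v ^ 2 * u ^ 4 = v ^ 2 * v ^ 4] (mod p)" using h by (intro cong_mult[OF cong_refl] cong_sym[of "v ^ 4"]) auto
        also have "v ^ 2 * v ^ 4 = v ^ 6" by (simp add: power_add[symmetric])
        also have "[v ^ 6 = u ^ 6] (mod p)" using h by simp
        also have "u ^ 6 = u ^ 2 * u ^ 4" by (simp add: power_add[symmetric])
        finally have "[v ^ 2 * u ^ 4 = u ^ 2 * u ^ 4] (mod p)" .
        moreover have "\<not> p dvd u ^ 4" using Fs_ndvd[OF u] p(1) by (simp add: prime_dvd_power_iff)
        ultimately show "[v ^ 2 = u ^ 2] (mod p)" using cong_mult_rcancel[OF ndvd_coprime[OF p(1) \<open>\<not> p dvd u ^ 4\<close>], of "v ^ 2" "u ^ 2"] by blast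
      next
        assume h: "[v ^ 2 = u ^ 2] (mod p)"
        have "[(v ^ 2) ^ 2 = (u ^ 2) ^ 2] (mod p)" "[(v ^ 2) ^ 3 = (u ^ 2) ^ 3] (mod p)" using cong_pow[OF h] by blast+
        thus "[v ^ 4 = u ^ 4] (mod p) \<and> [v ^ 6 = u ^ 6] (mod p)" by (simp add: power_mult[symmetric])
      qed
      thus ?thesis using a0 b0 base ca cb unfolding kk_def ab by simp
    qed
  qed
qed

lemma class_size:
  assumes p: "prime p" "p > 3" and E: "E \<in> GG p"
  shows "card (Rel p `` {E}) * gcd (kk E) (nat p - 1) = nat p - 1"
proof -
  have k0: "kk E > 0" unfolding kk_def by simp
  have "card ((\<lambda>u. act p u E) ` {1..<p}) * gcd (kk E) (nat p - 1) = card {1..<p}"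
  proof (rule image_fiber_card)
    fix u assume u: "u \<in> {1..<p}"
    have "{v\<in>{1..<p}. act p v E = act p u E} = {v\<in>{1..<p}. [v ^ kk E = u ^ kk E] (mod p)}"
      using fiber_act[OF p E u] by auto
    thus "card {v\<in>{1..<p}. act p v E = act p u E} = gcd (kk E) (nat p - 1)"
      using fiber_card[OF p(1) k0 u] by simp
  qed simp
  moreover have "card {1..<p} = nat p - 1" by simp
  ultimately show ?thesis using class_eq[OF p E] by simp
qed

lemma N2_sum:
  assumes p: "prime p" "p > 3"
  shows "real (N2 p) = (\<Sum>E\<in>GG p. real (gcd (kk E) (nat p - 1)) / real (nat p - 1))"
proof -
  have "N2 p = card (GG p // Rel p)" unfolding N2_def GG_def Rel_def by simp
  hence "real (N2 p) = (\<Sum>E\<in>GG p. 1 / real (card (Rel p `` {E})))"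
    using card_quotient_sum[OF equiv_Rel[OF p] finite_GG] by simp
  also have "\<dots> = (\<Sum>E\<in>GG p. real (gcd (kk E) (nat p - 1)) / real (nat p - 1))"
  proof (rule sum.cong[OF refl])
    fix E assume E: "E \<in> GG p"
    define c where "c = card (Rel p `` {E})"
    define g where "g = gcd (kk E) (nat p - 1)"
    have cs: "c * g = nat p - 1" using class_size[OF p E] unfolding c_def g_def .
    have "0 < c * g" unfolding cs using p by simp
    hence cg: "c > 0" "g > 0" by (auto simp: nat_0_less_mult_iff)
    have "real (c * g) = real (nat p - 1)" using cs by simp
    hence "real (nat p - 1) = real c * real g" by (simp only: of_nat_mult)
    hence "real g / real (nat p - 1) = 1 / real c" using cg by simp
    thus "1 / real (card (Rel p `` {E})) = real (gcd (kk E) (nat p - 1)) / real (nat p - 1)"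
      unfolding c_def g_def by simp
  qed
  finally show ?thesis .
qed



lemma G1_card:
  assumes p: "prime p" "p > 3"
  shows "card {E\<in>GG p. fst E \<noteq> 0 \<and> snd E = 0} = nat p - 1"
proof -
  have p0: "p > 0" using p by simp
  have "{E\<in>GG p. fst E \<noteq> 0 \<and> snd E = 0} = (\<lambda>a. (a, 0::int)) ` {1..<p}"
  proof (intro equalityI subsetI)
    fix E assume E: "E \<in> {E\<in>GG p. fst E \<noteq> 0 \<and> snd E = 0}"
    obtain a b where ab: "E = (a, b)" by (metis prod.collapse)
    have "a \<in> {0..<p}" "a \<noteq> 0" "b = 0" using E ab GG_iff[OF p] by auto
    thus "E \<in> (\<lambda>a. (a, 0::int)) ` {1..<p}" using ab by auto
  next
    fix E assume "E \<in> (\<lambda>a. (a, 0::int)) ` {1..<p}"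
    then obtain a where a: "a \<in> {1..<p}" "E = (a, 0)" by blast
    have "\<not> p dvd 4 * a ^ 3" using Fs_ndvd[OF a(1)] small_ndvd(3)[OF p] p(1)
      by (simp add: prime_dvd_mult_iff prime_dvd_power_iff)
    moreover have "0 \<in> rts p (a, 0)" unfolding rts_def using p0 by simp
    ultimately have "(a, 0) \<in> GG p" using GG_iff[OF p] a(1) p0 by auto
    thus "E \<in> {E\<in>GG p. fst E \<noteq> 0 \<and> snd E = 0}" using a by auto
  qed
  moreover have "inj_on (\<lambda>a. (a, 0::int)) {1..<p}" by (auto simp: inj_on_def)
  ultimately show ?thesis by (simp add: card_image)
qed

lemma G0_card:
  assumes p: "prime p" "p > 3"
  shows "card {E\<in>GG p. fst E = 0} * gcd 3 (nat p - 1) = nat p - 1"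
proof -
  have p0: "p > 0" using p by simp
  define cub where "cub = (\<lambda>u. (- (u ^ 3)) mod p) ` {1..<p}"
  have "{E\<in>GG p. fst E = 0} = (\<lambda>b. (0::int, b)) ` cub"
  proof (intro equalityI subsetI)
    fix E assume E: "E \<in> {E\<in>GG p. fst E = 0}"
    obtain a b where ab: "E = (a, b)" by (metis prod.collapse)
    have a0: "a = 0" and bF: "b \<in> {0..<p}" and disc: "\<not> p dvd (4 * a ^ 3 + 27 * b ^ 2)"
      and ne: "rts p (a, b) \<noteq> {}" using E ab GG_iff[OF p] by auto
    then obtain x where x: "x \<in> {0..<p}" "p dvd (x ^ 3 + b)" unfolding rts_def by auto
    have nb: "\<not> p dvd b"
    proof
      assume "p dvd b" hence "p dvd 27 * b ^ 2" by (simp add: power2_eq_square)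
      thus False using disc a0 by simp
    qed
    have "x \<noteq> 0" using x nb by auto
    hence xs: "x \<in> {1..<p}" using x by auto
    have "[b = - (x ^ 3)] (mod p)"
    proof -
      have "b - (- (x ^ 3)) = x ^ 3 + b" by simp
      thus ?thesis using x(2) by (simp only: cong_iff_dvd_diff)
    qed
    hence "b = (- (x ^ 3)) mod p" using bF by (simp add: cong_def)
    thus "E \<in> (\<lambda>b. (0::int, b)) ` cub" unfolding cub_def using ab a0 xs by auto
  next
    fix E assume "E \<in> (\<lambda>b. (0::int, b)) ` cub"
    then obtain u where u: "u \<in> {1..<p}" "E = (0, (- (u ^ 3)) mod p)" unfolding cub_def by blast
    define b where "b = (- (u ^ 3)) mod p"
    have cb: "[b = - (u ^ 3)] (mod p)" unfolding b_def by (rule cong_mod_self)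
    have "\<not> p dvd (u ^ 3)" using Fs_ndvd[OF u(1)] p(1) by (simp add: prime_dvd_power_iff)
    hence "\<not> p dvd b" using cb cong_dvd_iff by fastforce
    hence "\<not> p dvd 27 * b ^ 2"
    proof -
      have "\<not> p dvd 27"
      proof
        assume "p dvd 27" moreover have "(27::int) = 3 * 9" by simp
        ultimately show False using small_ndvd[OF p] p(1) prime_dvd_mult_iff by metis
      qed
      thus ?thesis using \<open>\<not> p dvd b\<close> p(1) by (simp add: prime_dvd_mult_iff prime_dvd_power_iff)
    qed
    moreover have "p dvd u ^ 3 + b"
    proof -
      have "[u ^ 3 + b = u ^ 3 + (- (u ^ 3))] (mod p)" using cb by (intro cong_add cong_refl)
      thus ?thesis by (simp add: cong_0_iff)
    qed
    hence "u \<in> rts p (0, b)" using u(1) unfolding rts_def by auto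
    ultimately have "(0, b) \<in> GG p" using GG_iff[OF p] p0 unfolding b_def by fastforce
    thus "E \<in> {E\<in>GG p. fst E = 0}" using u(2) unfolding b_def by simp
  qed
  moreover have "inj_on (\<lambda>b. (0::int, b)) cub" by (auto simp: inj_on_def)
  ultimately have c1: "card {E\<in>GG p. fst E = 0} = card cub" by (simp add: card_image)
  have "card cub * gcd 3 (nat p - 1) = card {1..<p}"
    unfolding cub_def
  proof (rule image_fiber_card)
    fix u assume u: "u \<in> {1..<p}"
    have "{v\<in>{1..<p}. (- (v ^ 3)) mod p = (- (u ^ 3)) mod p} = {v\<in>{1..<p}. [v ^ 3 = u ^ 3] (mod p)}"
      by (auto simp: cong_def[symmetric] cong_minus_minus_iff)
    thus "card {v\<in>{1..<p}. (- (v ^ 3)) mod p = (- (u ^ 3)) mod p} = gcd 3 (nat p - 1)"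
      using fiber_card[OF p(1) _ u, of 3] by simp
  qed simp
  thus ?thesis using c1 by simp
qed

lemma sum_split3:
  fixes f :: "nat \<Rightarrow> real"
  assumes fin: "finite A"
  shows "(\<Sum>E\<in>A. f (kk E)) = real (card {E\<in>A. fst E = 0}) * f 6
     + real (card {E\<in>A. fst E \<noteq> 0 \<and> snd E = 0}) * f 4 + real (card {E\<in>A. fst E \<noteq> 0 \<and> snd E \<noteq> 0}) * f 2"
proof -
  have A: "A = {E\<in>A. fst E = 0} \<union> ({E\<in>A. fst E \<noteq> 0 \<and> snd E = 0} \<union> {E\<in>A. fst E \<noteq> 0 \<and> snd E \<noteq> 0})" by auto
  have "(\<Sum>E\<in>A. f (kk E)) = (\<Sum>E\<in>{E\<in>A. fst E = 0}. f (kk E)) +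
      ((\<Sum>E\<in>{E\<in>A. fst E \<noteq> 0 \<and> snd E = 0}. f (kk E)) + (\<Sum>E\<in>{E\<in>A. fst E \<noteq> 0 \<and> snd E \<noteq> 0}. f (kk E)))"
    by (subst A, subst sum.union_disjoint, use fin in auto, subst sum.union_disjoint, auto)
  also have "(\<Sum>E\<in>{E\<in>A. fst E = 0}. f (kk E)) = (\<Sum>E\<in>{E\<in>A. fst E = 0}. f 6)"
    by (rule sum.cong) (auto simp: kk_def)
  also have "(\<Sum>E\<in>{E\<in>A. fst E \<noteq> 0 \<and> snd E = 0}. f (kk E)) = (\<Sum>E\<in>{E\<in>A. fst E \<noteq> 0 \<and> snd E = 0}. f 4)"
    by (rule sum.cong) (auto simp: kk_def)
  also have "(\<Sum>E\<in>{E\<in>A. fst E \<noteq> 0 \<and> snd E \<noteq> 0}. f (kk E)) = (\<Sum>E\<in>{E\<in>A. fst E \<noteq> 0 \<and> snd E \<noteq> 0}. f 2)"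
    by (rule sum.cong) (auto simp: kk_def)
  finally show ?thesis by simp
qed

lemma card_split3:
  assumes fin: "finite (A :: (int \<times> int) set)"
  shows "card A = card {E\<in>A. fst E = 0} + card {E\<in>A. fst E \<noteq> 0 \<and> snd E = 0} + card {E\<in>A. fst E \<noteq> 0 \<and> snd E \<noteq> 0}"
  using sum_split3[OF fin, of "\<lambda>_. 1"] by simp



lemma gcd_via12:
  fixes n k :: nat
  assumes "k dvd 12"
  shows "gcd k n = gcd k ((n mod 12) mod k)"
proof -
  have "gcd k n = gcd k (n mod k)" by (metis gcd.commute gcd_red_nat)
  also have "n mod k = (n mod 12) mod k" using assms by (simp add: mod_mod_cancel)
  finally show ?thesis .
qed

lemma g64: "gcd (6::nat) 4 = 2"
  using gcd_red_nat[of 6 4] gcd_red_nat[of 4 2] by simp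

lemma main_formula:
  assumes p: "prime p" "p > 3"
  defines "n \<equiv> nat p - 1"
  shows "real (N2 p) * real n = real (gcd 6 n) * real (card {E\<in>GG p. fst E = 0})
     + real (gcd 4 n) * real n + real (gcd 2 n) * (real (card (GG p)) - real (card {E\<in>GG p. fst E = 0}) - real n)"
proof -
  have n0: "real n > 0" unfolding n_def using p by simp
  have "real (N2 p) = (\<Sum>E\<in>GG p. (\<lambda>k. real (gcd k n) / real n) (kk E))"
    using N2_sum[OF p] unfolding n_def by simp
  also have "\<dots> = real (card {E\<in>GG p. fst E = 0}) * (real (gcd 6 n) / real n)
     + real (card {E\<in>GG p. fst E \<noteq> 0 \<and> snd E = 0}) * (real (gcd 4 n) / real n)
     + real (card {E\<in>GG p. fst E \<noteq> 0 \<and> snd E \<noteq> 0}) * (real (gcd 2 n) / real n)"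
    by (rule sum_split3[OF finite_GG])
  finally have e: "real (N2 p) * real n = real (card {E\<in>GG p. fst E = 0}) * real (gcd 6 n)
     + real (card {E\<in>GG p. fst E \<noteq> 0 \<and> snd E = 0}) * real (gcd 4 n)
     + real (card {E\<in>GG p. fst E \<noteq> 0 \<and> snd E \<noteq> 0}) * real (gcd 2 n)"
    using n0 by (simp add: field_simps)
  have c1: "card {E\<in>GG p. fst E \<noteq> 0 \<and> snd E = 0} = n" using G1_card[OF p] unfolding n_def .
  have cs: "real (card (GG p)) = real (card {E\<in>GG p. fst E = 0}) + real (card {E\<in>GG p. fst E \<noteq> 0 \<and> snd E = 0})
      + real (card {E\<in>GG p. fst E \<noteq> 0 \<and> snd E \<noteq> 0})"
    using card_split3[OF finite_GG, of p] by simp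
  show ?thesis using e c1 cs by (simp add: algebra_simps)
qed

theorem proposition9:
  fixes p :: int
  assumes "prime p" and "p > 3"
  shows "(p mod 12 = 1 \<longrightarrow> real (N2 p) = (4 * p + 8) / 3) \<and>
         (p mod 12 = 5 \<longrightarrow> real (N2 p) = (4 * p + 4) / 3) \<and>
         (p mod 12 = 7 \<longrightarrow> real (N2 p) = (4 * p + 2) / 3) \<and>
         (p mod 12 = 11 \<longrightarrow> real (N2 p) = (4 * p - 2) / 3)"
proof -
  note p = assms
  define n where "n = nat p - 1"
  define c0 where "c0 = real (card {E\<in>GG p. fst E = 0})"
  have n_eq: "real n = real_of_int p - 1" unfolding n_def using p by simp
  have n0: "real n > 0" using n_eq p by simp
  have M: "real (N2 p) * real n = real (gcd 6 n) * c0 + real (gcd 4 n) * real n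
     + real (gcd 2 n) * (real (card (GG p)) - c0 - real n)"
    using main_formula[OF p] unfolding n_def c0_def by simp
  have G0: "c0 * real (gcd 3 n) = real n"
    using G0_card[OF p] unfolding c0_def n_def by (metis of_nat_mult)
  have GGc: "3 * real (card (GG p)) = real n * (2 * real_of_int p - 1)"
  proof -
    have "3 * int (card (GG p)) = (p - 1) * (2 * p - 1)" using card_GG[OF p] .
    hence "real_of_int (3 * int (card (GG p))) = real_of_int ((p - 1) * (2 * p - 1))" by simp
    thus ?thesis using n_eq by simp
  qed
  have int_n: "int n = p - 1" unfolding n_def using p by simp
  have nmod: "int (n mod 12) = (p - 1) mod 12" using int_n by (metis of_nat_mod of_nat_numeral)
  have g: "gcd k n = gcd k ((n mod 12) mod k)" if "k dvd 12" for k using gcd_via12[OF that] .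
  have g2: "gcd 2 n = gcd 2 ((n mod 12) mod 2)" and g3: "gcd 3 n = gcd 3 ((n mod 12) mod 3)"
    and g4: "gcd 4 n = gcd 4 ((n mod 12) mod 4)" and g6: "gcd 6 n = gcd 6 ((n mod 12) mod 6)"
    by (rule g, simp)+
  define P where "P = real_of_int p"
  have cG: "real (card (GG p)) = (P - 1) * (2 * P - 1) / 3" using GGc n_eq unfolding P_def by (simp add: field_simps)
  have nP: "real n = P - 1" using n_eq unfolding P_def .
  have P1: "P - 1 > 0" using n0 nP by simp
  show ?thesis
  proof (intro conjI impI)
    assume h: "p mod 12 = 1"
    hence "(p - 1) mod 12 = 0" by (simp add: mod_diff_left_eq[symmetric])
    hence "n mod 12 = 0" using nmod by simp
    hence gs: "gcd 2 n = 2" "gcd 3 n = 3" "gcd 4 n = 4" "gcd 6 n = 6" using g2 g3 g4 g6 g64 by simp_all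
    have cc: "c0 = (P - 1) / 3" using G0 gs nP by (simp add: field_simps)
    have "real (N2 p) * (P - 1) = 6 * ((P - 1) / 3) + 4 * (P - 1) + 2 * ((P - 1) * (2 * P - 1) / 3 - ((P - 1) / 3) - (P - 1))"
      using M unfolding gs cG cc nP by simp
    also have "\<dots> = (P - 1) * ((4 * P + 8) / 3)" by (simp add: field_simps)
    finally have "real (N2 p) = (4 * P + 8) / 3" using P1 by simp
    thus "real (N2 p) = real_of_int (4 * p + 8) / 3" unfolding P_def by simp
  next
    assume h: "p mod 12 = 5"
    hence "(p - 1) mod 12 = 4" by (simp add: mod_diff_left_eq[symmetric])
    hence "n mod 12 = 4" using nmod by simp
    hence gs: "gcd 2 n = 2" "gcd 3 n = 1" "gcd 4 n = 4" "gcd 6 n = 2" using g2 g3 g4 g6 g64 by simp_all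
    have cc: "c0 = (P - 1)" using G0 gs nP by (simp add: field_simps)
    have "real (N2 p) * (P - 1) = 2 * ((P - 1)) + 4 * (P - 1) + 2 * ((P - 1) * (2 * P - 1) / 3 - ((P - 1)) - (P - 1))"
      using M unfolding gs cG cc nP by simp
    also have "\<dots> = (P - 1) * ((4 * P + 4) / 3)" by (simp add: field_simps)
    finally have "real (N2 p) = (4 * P + 4) / 3" using P1 by simp
    thus "real (N2 p) = real_of_int (4 * p + 4) / 3" unfolding P_def by simp
  next
    assume h: "p mod 12 = 7"
    hence "(p - 1) mod 12 = 6" by (simp add: mod_diff_left_eq[symmetric])
    hence "n mod 12 = 6" using nmod by simp
    hence gs: "gcd 2 n = 2" "gcd 3 n = 3" "gcd 4 n = 2" "gcd 6 n = 6" using g2 g3 g4 g6 g64 by simp_all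
    have cc: "c0 = (P - 1) / 3" using G0 gs nP by (simp add: field_simps)
    have "real (N2 p) * (P - 1) = 6 * ((P - 1) / 3) + 2 * (P - 1) + 2 * ((P - 1) * (2 * P - 1) / 3 - ((P - 1) / 3) - (P - 1))"
      using M unfolding gs cG cc nP by simp
    also have "\<dots> = (P - 1) * ((4 * P + 2) / 3)" by (simp add: field_simps)
    finally have "real (N2 p) = (4 * P + 2) / 3" using P1 by simp
    thus "real (N2 p) = real_of_int (4 * p + 2) / 3" unfolding P_def by simp
  next
    assume h: "p mod 12 = 11"
    hence "(p - 1) mod 12 = 10" by (simp add: mod_diff_left_eq[symmetric])
    hence "n mod 12 = 10" using nmod by simp
    hence gs: "gcd 2 n = 2" "gcd 3 n = 1" "gcd 4 n = 2" "gcd 6 n = 2" using g2 g3 g4 g6 g64 by simp_all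
    have cc: "c0 = (P - 1)" using G0 gs nP by (simp add: field_simps)
    have "real (N2 p) * (P - 1) = 2 * ((P - 1)) + 2 * (P - 1) + 2 * ((P - 1) * (2 * P - 1) / 3 - ((P - 1)) - (P - 1))"
      using M unfolding gs cG cc nP by simp
    also have "\<dots> = (P - 1) * ((4 * P - 2) / 3)" by (simp add: field_simps)
    finally have "real (N2 p) = (4 * P - 2) / 3" using P1 by simp
    thus "real (N2 p) = real_of_int (4 * p - 2) / 3" unfolding P_def by simp
  qed
qed

end
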